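(* Let $\Theta$ be a quantum superchannel from $\mathrm{CPTP}(A\to B)$ to $\mathrm{CPTP}(A'\to B)$ written in standard form $\Theta[\mathcal{N}]=\mathcal{E}^{RB\to B}\circ\mathcal{N}^{A\to B}\circ\mathcal{V}^{A'\to RA}$. The following are equivalent: (1) $\Theta$ is completely uniformity-preserving; (2) the channel $\Theta\otimes\mathbb{1}^{(\mathbb{C}\to C)}\big[\mathbf{u}^B\otimes\mathrm{id}^{A\to C}\big]\in\mathrm{CPTP}(A'\to BC)$, where $C$ is a replica of $A$ and $\mathbf{u}^B\otimes\mathrm{id}^{A\to C}$ is the channel $\rho^A\mapsto\mathbf{u}^B\otimes\rho^C$, is marginally uniform with respect to $B$; (3) $\Theta$ is a mixing superchannel, i.e. $\mathcal{E}^{RB\to B}$ is conditionally unital.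
   Context: Systems are finite-dimensional; $\mathrm{CPTP}(A\to B)$ is the set of quantum channels; $\mathbf{u}^B=I^B/|B|$. Every superchannel can be realized as $\Theta[\mathcal{N}]=\mathcal{E}^{RB\to B}\circ\mathcal{N}^{A\to B}\circ\mathcal{V}^{A'\to RA}$ with an auxiliary system $R$, an isometry channel $\mathcal{V}$ and a channel $\mathcal{E}$ (identity on systems not acted upon); it is in standard form if $|R|$ is the minimal possible dimension among such realizations. For systems $C_0,C_1$, $\Theta\otimes\mathbb{1}^{(C_0\to C_1)}$ acts on $\mathcal{N}^{AC_0\to BC_1}$ by $\mathcal{E}^{RB\to B}\circ\mathcal{N}^{AC_0\to BC_1}\circ\mathcal{V}^{A'\to RA}$. A channel $\mathcal{N}\in\mathrm{CPTP}(AC_0\to BC_1)$ is marginally uniform with respect to $B$ if $\mathcal{N}=\mathbf{u}^B\otimes\mathcal{N}^{AC_0\to C_1}$ where $\mathcal{N}^{AC_0\to C_1}=\mathrm{Tr}_B\circ\mathcal{N}$. $\Theta$ is completely uniformity-preserving if for all systems $C_0,C_1$ and every marginally uniform $\mathcal{N}^{AC_0\to BC_1}$, $\Theta\otimes\mathbb{1}^{(C_0\to C_1)}[\mathcal{N}]$ is marginally uniform with respect to $B$. A channel $\mathcal{E}\in\mathrm{CPTP}(RB\to B)$ is conditionally unital if for every density matrix $\tau^R$ the channel $\omega^B\mapsto\mathcal{E}(\tau^R\otimes\omega^B)$ is unital, i.e. $\mathcal{E}(\tau^R\otimes\mathbf{u}^B)=\mathbf{u}^B$. *)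

theory Defs
  imports "Jordan_Normal_Form.Matrix" Complex_Main
begin

text \<open>Composite systems X Y are modelled by the Kronecker
  product with the first-named factor as the most significant index.\<close>

definition kron :: "complex mat \<Rightarrow> complex mat \<Rightarrow> complex mat" where
  "kron A B = mat (dim_row A * dim_row B) (dim_col A * dim_col B)
     (\<lambda>(i,j). A $$ (i div dim_row B, j div dim_col B) * B $$ (i mod dim_row B, j mod dim_col B))"

definition adj :: "complex mat \<Rightarrow> complex mat" where
  "adj M = mat (dim_col M) (dim_row M) (\<lambda>(i,j). cnj (M $$ (j,i)))"

definition mtrace :: "complex mat \<Rightarrow> complex" where
  "mtrace X = (\<Sum>i<dim_row X. X $$ (i,i))"

definition psd :: "nat \<Rightarrow> complex mat \<Rightarrow> bool" where
  "psd d X \<longleftrightarrow> X \<in> carrier_mat d d \<and>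
     (\<forall>v \<in> carrier_vec d. let q = (\<Sum>i<d. \<Sum>j<d. cnj (v $ i) * X $$ (i,j) * v $ j)
                         in Im q = 0 \<and> 0 \<le> Re q)"

definition density :: "nat \<Rightarrow> complex mat \<Rightarrow> bool" where
  "density d X \<longleftrightarrow> psd d X \<and> mtrace X = 1"

definition unif :: "nat \<Rightarrow> complex mat" where
  "unif d = (1 / of_nat d) \<cdot>\<^sub>m 1\<^sub>m d"

definition ptrace_first :: "nat \<Rightarrow> nat \<Rightarrow> complex mat \<Rightarrow> complex mat" where
  "ptrace_first dB dC X = mat dC dC (\<lambda>(i,j). \<Sum>k<dB. X $$ (k*dC + i, k*dC + j))"

text \<open>id_n \<otimes> \<Phi>, the ancilla (dimension n) being the first factor; \<Phi> : dIn \<rightarrow> dOut.\<close>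
definition id_tensor :: "nat \<Rightarrow> nat \<Rightarrow> nat \<Rightarrow> (complex mat \<Rightarrow> complex mat) \<Rightarrow> complex mat \<Rightarrow> complex mat" where
  "id_tensor n dIn dOut \<Phi> X = mat (n*dOut) (n*dOut) (\<lambda>(r,s).
      \<Phi> (mat dIn dIn (\<lambda>(i,j). X $$ ((r div dOut)*dIn + i, (s div dOut)*dIn + j))) $$ (r mod dOut, s mod dOut))"

text \<open>\<Phi> \<otimes> id_dC, the untouched system (dimension dC) being the last factor.\<close>
definition tensor_id :: "nat \<Rightarrow> nat \<Rightarrow> (complex mat \<Rightarrow> complex mat) \<Rightarrow> nat \<Rightarrow> complex mat \<Rightarrow> complex mat" where
  "tensor_id dIn dOut \<Phi> dC X = mat (dOut*dC) (dOut*dC) (\<lambda>(r,s).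
      \<Phi> (mat dIn dIn (\<lambda>(i,j). X $$ (i*dC + r mod dC, j*dC + s mod dC))) $$ (r div dC, s div dC))"

text \<open>Quantum channels CPTP(dIn \<rightarrow> dOut): linear, completely positive, trace preserving
  maps (only their action on dIn x dIn matrices is relevant).\<close>
definition CPTP :: "nat \<Rightarrow> nat \<Rightarrow> (complex mat \<Rightarrow> complex mat) \<Rightarrow> bool" where
  "CPTP dIn dOut \<Phi> \<longleftrightarrow>
     (\<forall>X \<in> carrier_mat dIn dIn. \<Phi> X \<in> carrier_mat dOut dOut) \<and>
     (\<forall>X \<in> carrier_mat dIn dIn. \<forall>Y \<in> carrier_mat dIn dIn. \<Phi> (X + Y) = \<Phi> X + \<Phi> Y) \<and>
     (\<forall>X \<in> carrier_mat dIn dIn. \<forall>c::complex. \<Phi> (c \<cdot>\<^sub>m X) = c \<cdot>\<^sub>m \<Phi> X) \<and>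
     (\<forall>X \<in> carrier_mat dIn dIn. mtrace (\<Phi> X) = mtrace X) \<and>
     (\<forall>n>0. \<forall>X. psd (n*dIn) X \<longrightarrow> psd (n*dOut) (id_tensor n dIn dOut \<Phi> X))"

definition isometry :: "nat \<Rightarrow> nat \<Rightarrow> complex mat \<Rightarrow> bool" where
  "isometry dIn dOut V \<longleftrightarrow> V \<in> carrier_mat dOut dIn \<and> adj V * V = 1\<^sub>m dIn"

text \<open>The superchannel realized by (dR, V, E), with V : A' \<rightarrow> R A and E : R B \<rightarrow> B,
  tensored with the identity supermap 1^(C0 \<rightarrow> C1) and applied to N : A C0 \<rightarrow> B C1:
  (E \<otimes> id_C1) \<circ> (id_R \<otimes> N) \<circ> (V \<otimes> id_C0).\<close>
definition superch_ext ::
  "nat \<Rightarrow> nat \<Rightarrow> nat \<Rightarrow> nat \<Rightarrow> complex mat \<Rightarrow> (complex mat \<Rightarrow> complex mat) \<Rightarrow> nat \<Rightarrow> nat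
     \<Rightarrow> (complex mat \<Rightarrow> complex mat) \<Rightarrow> complex mat \<Rightarrow> complex mat" where
  "superch_ext dA' dA dB dR V E dC0 dC1 N X =
     tensor_id (dR*dB) dB E dC1
       (id_tensor dR (dA*dC0) (dB*dC1) N
          (tensor_id dA' (dR*dA) (\<lambda>Y. V * Y * adj V) dC0 X))"

definition superch ::
  "nat \<Rightarrow> nat \<Rightarrow> nat \<Rightarrow> complex mat \<Rightarrow> (complex mat \<Rightarrow> complex mat)
     \<Rightarrow> (complex mat \<Rightarrow> complex mat) \<Rightarrow> complex mat \<Rightarrow> complex mat" where
  "superch dA dB dR V E N X = E (id_tensor dR dA dB N (V * X * adj V))"

definition realization :: "nat \<Rightarrow> nat \<Rightarrow> nat \<Rightarrow> nat \<Rightarrow> complex mat \<Rightarrow> (complex mat \<Rightarrow> complex mat) \<Rightarrow> bool" where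
  "realization dA' dA dB dR V E \<longleftrightarrow> 0 < dR \<and> isometry dA' (dR*dA) V \<and> CPTP (dR*dB) dB E"

text \<open>Standard form: dR is minimal among all realizations of the same superchannel.\<close>
definition standard_form :: "nat \<Rightarrow> nat \<Rightarrow> nat \<Rightarrow> nat \<Rightarrow> complex mat \<Rightarrow> (complex mat \<Rightarrow> complex mat) \<Rightarrow> bool" where
  "standard_form dA' dA dB dR V E \<longleftrightarrow> realization dA' dA dB dR V E \<and>
     (\<forall>dR' V' E'. realization dA' dA dB dR' V' E' \<and>
        (\<forall>N. CPTP dA dB N \<longrightarrow> (\<forall>X \<in> carrier_mat dA' dA'.
             superch dA dB dR' V' E' N X = superch dA dB dR V E N X))
        \<longrightarrow> dR \<le> dR')"

definition marg_uniform :: "nat \<Rightarrow> nat \<Rightarrow> nat \<Rightarrow> (complex mat \<Rightarrow> complex mat) \<Rightarrow> bool" where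
  "marg_uniform dIn dB dC N \<longleftrightarrow>
     (\<forall>X \<in> carrier_mat dIn dIn. N X = kron (unif dB) (ptrace_first dB dC (N X)))"

definition compl_unif_preserving ::
  "nat \<Rightarrow> nat \<Rightarrow> nat \<Rightarrow> nat \<Rightarrow> complex mat \<Rightarrow> (complex mat \<Rightarrow> complex mat) \<Rightarrow> bool" where
  "compl_unif_preserving dA' dA dB dR V E \<longleftrightarrow>
     (\<forall>dC0 dC1 N. 0 < dC0 \<and> 0 < dC1 \<and> CPTP (dA*dC0) (dB*dC1) N \<and> marg_uniform (dA*dC0) dB dC1 N
        \<longrightarrow> marg_uniform (dA'*dC0) dB dC1 (superch_ext dA' dA dB dR V E dC0 dC1 N))"

definition cond_unital :: "nat \<Rightarrow> nat \<Rightarrow> (complex mat \<Rightarrow> complex mat) \<Rightarrow> bool" where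
  "cond_unital dR dB E \<longleftrightarrow> (\<forall>\<tau>. density dR \<tau> \<longrightarrow> E (kron \<tau> (unif dB)) = unif dB)"

end

theory Submission
  imports Defs "Jordan_Normal_Form.Determinant"
begin


lemma sum_split: fixes f :: "nat \<Rightarrow> 'a::comm_monoid_add"
  shows "(\<Sum>r<a*b. f r) = (\<Sum>i<a. \<Sum>j<b. f (i*b + j))"
proof -
  have "(\<Sum>r<a*b. f r) = (\<Sum>i<a. sum f {i*b..<i*b+b})"
    using sum.nat_group[of f b a] by simp
  also have "\<dots> = (\<Sum>i<a. \<Sum>j<b. f (i*b + j))"
  proof (rule sum.cong[OF refl])
    fix i show "sum f {i*b..<i*b+b} = (\<Sum>j<b. f (i*b + j))"
    proof -
      have "sum f {i*b..<i*b+b} = sum f {0+i*b..<b+i*b}" by (simp add: add.commute)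
      also have "\<dots> = (\<Sum>j=0..<b. f (j + i*b))" by (rule sum.shift_bounds_nat_ivl)
      finally show ?thesis by (simp add: lessThan_atLeast0 add.commute)
    qed
  qed
  finally show ?thesis .
qed

lemma divmod1: fixes i c d b :: nat shows "c < d \<Longrightarrow> (i*d + c) div (b*d) = i div b"
proof -
  assume c: "c < d"
  have "(i*d+c) div (d*b) = (i*d+c) div d div b" by (simp add: div_mult2_eq)
  moreover have "(i*d+c) div d = i" using c by simp
  ultimately show ?thesis by (simp add: mult.commute)
qed
lemma divmod2: fixes i c d b :: nat shows "c < d \<Longrightarrow> (i*d + c) mod (b*d) = (i mod b)*d + c"
proof -
  assume c: "c < d"
  have "(i*d+c) mod (d*b) = d * ((i*d+c) div d mod b) + (i*d+c) mod d" by (simp add: mod_mult2_eq)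
  moreover have "(i*d+c) div d = i" using c by simp
  moreover have "(i*d+c) mod d = c" using c by simp
  ultimately show ?thesis by (simp add: mult.commute)
qed


lemma swap4: "(\<Sum>r\<in>R. \<Sum>s\<in>S. \<Sum>t\<in>T. \<Sum>u\<in>U. f r s t u) = (\<Sum>t\<in>T. \<Sum>u\<in>U. \<Sum>r\<in>R. \<Sum>s\<in>S. f r s t u)"
proof -
  have "(\<Sum>r\<in>R. \<Sum>s\<in>S. \<Sum>t\<in>T. \<Sum>u\<in>U. f r s t u) = (\<Sum>r\<in>R. \<Sum>t\<in>T. \<Sum>u\<in>U. \<Sum>s\<in>S. f r s t u)"
    by (rule sum.cong[OF refl], subst sum.swap, rule sum.cong[OF refl], rule sum.swap)
  also have "\<dots> = (\<Sum>t\<in>T. \<Sum>r\<in>R. \<Sum>u\<in>U. \<Sum>s\<in>S. f r s t u)" by (rule sum.swap)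
  also have "\<dots> = (\<Sum>t\<in>T. \<Sum>u\<in>U. \<Sum>r\<in>R. \<Sum>s\<in>S. f r s t u)" by (rule sum.cong[OF refl], rule sum.swap)
  finally show ?thesis .
qed

lemma psdI: "X \<in> carrier_mat d d \<Longrightarrow> (\<And>v. v \<in> carrier_vec d \<Longrightarrow> \<exists>r::real. r \<ge> 0 \<and> (\<Sum>i<d. \<Sum>j<d. cnj (v $ i) * X $$ (i,j) * v $ j) = of_real r) \<Longrightarrow> psd d X"
  unfolding psd_def Let_def by fastforce

lemma psdD: "psd d X \<Longrightarrow> v \<in> carrier_vec d \<Longrightarrow> \<exists>r::real. r \<ge> 0 \<and> (\<Sum>i<d. \<Sum>j<d. cnj (v $ i) * X $$ (i,j) * v $ j) = of_real r"
proof -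
  assume "psd d X" "v \<in> carrier_vec d"
  hence "Im (\<Sum>i<d. \<Sum>j<d. cnj (v $ i) * X $$ (i,j) * v $ j) = 0"
    "0 \<le> Re (\<Sum>i<d. \<Sum>j<d. cnj (v $ i) * X $$ (i,j) * v $ j)" unfolding psd_def Let_def by auto
  thus ?thesis by (intro exI[of _ "Re (\<Sum>i<d. \<Sum>j<d. cnj (v $ i) * X $$ (i,j) * v $ j)"]) (simp add: complex_eq_iff)
qed

lemma psd_carrier: "psd d X \<Longrightarrow> X \<in> carrier_mat d d" unfolding psd_def by auto

lemma psd_congr:
  assumes X: "psd n X"
  shows "psd m (mat m m (\<lambda>(r,s). \<Sum>t<n. \<Sum>t'<n. A r t * X $$ (t,t') * cnj (A s t')))"
proof (rule psdI)
  fix v :: "complex vec" assume v: "v \<in> carrier_vec m"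
  define w where "w = vec n (\<lambda>t. \<Sum>r<m. cnj (A r t) * v $ r)"
  have w: "w \<in> carrier_vec n" unfolding w_def by simp
  have "(\<Sum>i<m. \<Sum>j<m. cnj (v $ i) * mat m m (\<lambda>(r,s). \<Sum>t<n. \<Sum>t'<n. A r t * X $$ (t,t') * cnj (A s t')) $$ (i,j) * v $ j)
     = (\<Sum>i<m. \<Sum>j<m. \<Sum>t<n. \<Sum>t'<n. cnj (v $ i) * A i t * X $$ (t,t') * cnj (A j t') * v $ j)"
    by (simp add: sum_distrib_left sum_distrib_right mult.assoc)
  also have "\<dots> = (\<Sum>t<n. \<Sum>t'<n. \<Sum>i<m. \<Sum>j<m. cnj (v $ i) * A i t * X $$ (t,t') * cnj (A j t') * v $ j)"
    by (rule swap4)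
  also have "\<dots> = (\<Sum>t<n. \<Sum>t'<n. cnj (w $ t) * X $$ (t,t') * w $ t')"
    unfolding w_def by (simp add: sum_distrib_left sum_distrib_right mult.assoc mult.commute mult.left_commute)
  finally show "\<exists>r::real. r \<ge> 0 \<and> (\<Sum>i<m. \<Sum>j<m. cnj (v $ i) * mat m m (\<lambda>(r,s). \<Sum>t<n. \<Sum>t'<n. A r t * X $$ (t,t') * cnj (A s t')) $$ (i,j) * v $ j) = of_real r"
    using psdD[OF X w] by simp
qed simp

lemma psd_sum:
  assumes "finite I" "\<forall>b\<in>I. psd n (M b)"
  shows "psd n (mat n n (\<lambda>(i,j). \<Sum>b\<in>I. M b $$ (i,j)))"
proof (rule psdI)
  fix v :: "complex vec" assume v: "v \<in> carrier_vec n"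
  have "\<forall>b\<in>I. \<exists>r::real. r \<ge> 0 \<and> (\<Sum>i<n. \<Sum>j<n. cnj (v $ i) * M b $$ (i,j) * v $ j) = of_real r"
    using assms psdD v by blast
  then obtain r where r: "\<forall>b\<in>I. r b \<ge> 0 \<and> (\<Sum>i<n. \<Sum>j<n. cnj (v $ i) * M b $$ (i,j) * v $ j) = of_real (r b)"
    by (rule bchoice[THEN exE]) blast
  have "(\<Sum>i<n. \<Sum>j<n. cnj (v $ i) * mat n n (\<lambda>(i,j). \<Sum>b\<in>I. M b $$ (i,j)) $$ (i,j) * v $ j)
      = (\<Sum>b\<in>I. \<Sum>i<n. \<Sum>j<n. cnj (v $ i) * M b $$ (i,j) * v $ j)"
    by (simp add: sum_distrib_left sum_distrib_right mult.assoc, subst sum.swap, rule sum.cong[OF refl], rule sum.swap)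
  also have "\<dots> = of_real (\<Sum>b\<in>I. r b)" using r by simp
  finally show "\<exists>r::real. r \<ge> 0 \<and> (\<Sum>i<n. \<Sum>j<n. cnj (v $ i) * mat n n (\<lambda>(i,j). \<Sum>b\<in>I. M b $$ (i,j)) $$ (i,j) * v $ j) = of_real r"
    using r by (intro exI[of _ "\<Sum>b\<in>I. r b"]) (simp add: sum_nonneg)
qed simp

lemma delta_split:
  fixes h :: "nat \<Rightarrow> 'a::comm_monoid_add"
  assumes R: "R < n"
  shows "(\<Sum>t<n*d. if t div d = R then h t else 0) = (\<Sum>k<d. h (R*d + k))"
proof -
  have "(\<Sum>t<n*d. if t div d = R then h t else 0) = (\<Sum>m<n. \<Sum>k<d. if (m*d+k) div d = R then h (m*d+k) else 0)"
    by (rule sum_split)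
  also have "\<dots> = (\<Sum>m<n. if m = R then (\<Sum>k<d. h (m*d+k)) else 0)"
    by (rule sum.cong[OF refl]) auto
  also have "\<dots> = (\<Sum>k<d. h (R*d + k))" using R by simp
  finally show ?thesis .
qed

lemma kraus_entry:
  fixes R S n dIn :: nat and Y :: "nat \<Rightarrow> nat \<Rightarrow> complex"
  assumes R: "R < n" and S: "S < n"
  shows "(\<Sum>t<n*dIn. \<Sum>t'<n*dIn. (if t div dIn = R then J (t mod dIn) else 0) * Y t t' * cnj (if t' div dIn = S then J' (t' mod dIn) else 0))
    = (\<Sum>k<dIn. \<Sum>l<dIn. J k * Y (R*dIn+k) (S*dIn+l) * cnj (J' l))"
proof -
  have "(\<Sum>t<n*dIn. \<Sum>t'<n*dIn. (if t div dIn = R then J (t mod dIn) else 0) * Y t t' * cnj (if t' div dIn = S then J' (t' mod dIn) else 0))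
     = (\<Sum>t<n*dIn. if t div dIn = R then (\<Sum>t'<n*dIn. J (t mod dIn) * Y t t' * cnj (if t' div dIn = S then J' (t' mod dIn) else 0)) else 0)"
    by (rule sum.cong[OF refl]) auto
  also have "\<dots> = (\<Sum>k<dIn. \<Sum>t'<n*dIn. J ((R*dIn+k) mod dIn) * Y (R*dIn+k) t' * cnj (if t' div dIn = S then J' (t' mod dIn) else 0))"
    by (rule delta_split[OF R])
  also have "\<dots> = (\<Sum>k<dIn. \<Sum>t'<n*dIn. if t' div dIn = S then J k * Y (R*dIn+k) t' * cnj (J' (t' mod dIn)) else 0)"
    by (rule sum.cong[OF refl], rule sum.cong[OF refl]) auto
  also have "\<dots> = (\<Sum>k<dIn. \<Sum>l<dIn. J k * Y (R*dIn+k) (S*dIn+l) * cnj (J' ((S*dIn+l) mod dIn)))"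
    by (rule sum.cong[OF refl], rule delta_split[OF S])
  also have "\<dots> = (\<Sum>k<dIn. \<Sum>l<dIn. J k * Y (R*dIn+k) (S*dIn+l) * cnj (J' l))"
    by (rule sum.cong[OF refl], rule sum.cong[OF refl]) auto
  finally show ?thesis .
qed

lemma kraus_CP:
  fixes K n dIn dOut :: nat and J :: "nat \<Rightarrow> nat \<Rightarrow> nat \<Rightarrow> complex"
  assumes Phi: "\<forall>Y\<in>carrier_mat dIn dIn. \<Phi> Y = mat dOut dOut (\<lambda>(p,q). \<Sum>b<K. \<Sum>k<dIn. \<Sum>l<dIn. J b p k * Y $$ (k,l) * cnj (J b q l))"
    and X: "psd (n*dIn) X"
  shows "psd (n*dOut) (id_tensor n dIn dOut \<Phi> X)"
proof -
  define A where "A b r t = (if t div dIn = r div dOut then J b (r mod dOut) (t mod dIn) else 0)" for b r t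
  define M where "M b = mat (n*dOut) (n*dOut) (\<lambda>(r,s). \<Sum>t<n*dIn. \<Sum>t'<n*dIn. A b r t * X $$ (t,t') * cnj (A b s t'))" for b
  have "psd (n*dOut) (mat (n*dOut) (n*dOut) (\<lambda>(i,j). \<Sum>b\<in>{..<K}. M b $$ (i,j)))"
    unfolding M_def by (intro psd_sum) (simp_all add: psd_congr[OF X])
  moreover have "id_tensor n dIn dOut \<Phi> X = mat (n*dOut) (n*dOut) (\<lambda>(i,j). \<Sum>b\<in>{..<K}. M b $$ (i,j))"
  proof (rule eq_matI)
    fix r s assume r: "r < dim_row (mat (n*dOut) (n*dOut) (\<lambda>(i,j). \<Sum>b\<in>{..<K}. M b $$ (i,j)))"
      and s: "s < dim_col (mat (n*dOut) (n*dOut) (\<lambda>(i,j). \<Sum>b\<in>{..<K}. M b $$ (i,j)))"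
    have r': "r < n*dOut" and s': "s < n*dOut" using r s by auto
    have R: "r div dOut < n" and S: "s div dOut < n" using r' s'
      by (simp_all add: less_mult_imp_div_less mult.commute)
    have "id_tensor n dIn dOut \<Phi> X $$ (r,s) = (\<Sum>b<K. \<Sum>k<dIn. \<Sum>l<dIn. J b (r mod dOut) k *
         X $$ ((r div dOut)*dIn + k, (s div dOut)*dIn + l) * cnj (J b (s mod dOut) l))"
    proof -
      have d: "0 < dOut" using r' by (cases dOut) auto
      show ?thesis using r' s' Phi d unfolding id_tensor_def by simp
    qed
    also have "\<dots> = (\<Sum>b<K. \<Sum>t<n*dIn. \<Sum>t'<n*dIn. A b r t * X $$ (t,t') * cnj (A b s t'))"
      unfolding A_def by (rule sum.cong[OF refl], rule kraus_entry[OF R S, where Y = "\<lambda>t t'. X $$ (t,t')", symmetric])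
    also have "\<dots> = (\<Sum>b<K. M b $$ (r,s))"
      unfolding M_def using r' s' by simp
    finally show "id_tensor n dIn dOut \<Phi> X $$ (r,s) = mat (n*dOut) (n*dOut) (\<lambda>(i,j). \<Sum>b\<in>{..<K}. M b $$ (i,j)) $$ (r,s)"
      using r' s' by simp
  qed (auto simp: id_tensor_def)
  ultimately show ?thesis by simp
qed

lemma idx_lt: fixes R n i d :: nat shows "R < n \<Longrightarrow> i < d \<Longrightarrow> R*d + i < n*d"
proof -
  assume a: "R < n" "i < d"
  have "R*d + i < R*d + d" using a by simp
  also have "\<dots> = (R+1)*d" by simp
  also have "\<dots> \<le> n*d" using a by (intro mult_le_mono1) simp
  finally show ?thesis .
qed

lemma div_lt: fixes r n d :: nat shows "r < n*d \<Longrightarrow> r div d < n"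
  by (simp add: less_mult_imp_div_less)
lemma mod_lt: fixes r n d :: nat shows "r < n*d \<Longrightarrow> r mod d < d"
  by (cases d) auto
lemma id_tensor_index: "r < n*dOut \<Longrightarrow> s < n*dOut \<Longrightarrow> id_tensor n dIn dOut \<Phi> X $$ (r,s) =
  \<Phi> (mat dIn dIn (\<lambda>(i,j). X $$ ((r div dOut)*dIn + i, (s div dOut)*dIn + j))) $$ (r mod dOut, s mod dOut)"
  by (simp add: id_tensor_def)
lemma id_tensor_dim[simp]: "dim_row (id_tensor n dIn dOut \<Phi> X) = n*dOut" "dim_col (id_tensor n dIn dOut \<Phi> X) = n*dOut"
  "id_tensor n dIn dOut \<Phi> X \<in> carrier_mat (n*dOut) (n*dOut)"
  by (simp_all add: id_tensor_def)

lemma id_tensor_comp: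
  assumes Phi: "\<forall>Y\<in>carrier_mat dIn dIn. \<Phi> Y \<in> carrier_mat dMid dMid"
  shows "id_tensor n dIn dOut (\<lambda>Y. E (\<Phi> Y)) X = id_tensor n dMid dOut E (id_tensor n dIn dMid \<Phi> X)"
proof (rule eq_matI)
  fix r s assume "r < dim_row (id_tensor n dMid dOut E (id_tensor n dIn dMid \<Phi> X))"
    "s < dim_col (id_tensor n dMid dOut E (id_tensor n dIn dMid \<Phi> X))"
  hence r: "r < n*dOut" and s: "s < n*dOut" by auto
  have R: "r div dOut < n" and S: "s div dOut < n" using r s by (simp_all add: div_lt)
  let ?B = "mat dIn dIn (\<lambda>(i,j). X $$ ((r div dOut)*dIn + i, (s div dOut)*dIn + j))"
  have B: "?B \<in> carrier_mat dIn dIn" by simp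
  have PB: "\<Phi> ?B \<in> carrier_mat dMid dMid" using Phi B by blast
  have eq: "mat dMid dMid (\<lambda>(i,j). id_tensor n dIn dMid \<Phi> X $$ ((r div dOut)*dMid + i, (s div dOut)*dMid + j)) = \<Phi> ?B"
  proof (rule eq_matI)
    fix i j assume i: "i < dim_row (\<Phi> ?B)" and j: "j < dim_col (\<Phi> ?B)"
    have i': "i < dMid" and j': "j < dMid" using i j PB by auto
    have a: "(r div dOut)*dMid + i < n*dMid" using R i' by (rule idx_lt)
    have b: "(s div dOut)*dMid + j < n*dMid" using S j' by (rule idx_lt)
    show "mat dMid dMid (\<lambda>(i,j). id_tensor n dIn dMid \<Phi> X $$ ((r div dOut)*dMid + i, (s div dOut)*dMid + j)) $$ (i,j) = \<Phi> ?B $$ (i,j)"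
      using i' j' by (simp add: id_tensor_index[OF a b])
  qed (use PB in auto)
  show "id_tensor n dIn dOut (\<lambda>Y. E (\<Phi> Y)) X $$ (r,s) = id_tensor n dMid dOut E (id_tensor n dIn dMid \<Phi> X) $$ (r,s)"
    unfolding id_tensor_index[OF r s] eq ..
qed auto



definition linmap :: "nat \<Rightarrow> nat \<Rightarrow> (complex mat \<Rightarrow> complex mat) \<Rightarrow> bool" where
  "linmap n m f \<longleftrightarrow> (\<forall>X\<in>carrier_mat n n. f X \<in> carrier_mat m m) \<and>
     (\<forall>X\<in>carrier_mat n n. \<forall>Y\<in>carrier_mat n n. f (X+Y) = f X + f Y) \<and>
     (\<forall>X\<in>carrier_mat n n. \<forall>c. f (c \<cdot>\<^sub>m X) = c \<cdot>\<^sub>m f X)"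

lemma CPTP_linmap: "CPTP n m f \<Longrightarrow> linmap n m f"
  by (simp add: CPTP_def linmap_def)

lemma lin_sum:
  assumes lin: "linmap n m f" and fin: "finite I" and Ms: "\<forall>k\<in>I. Ms k \<in> carrier_mat n n"
  shows "f (mat n n (\<lambda>(i,j). \<Sum>k\<in>I. c k * Ms k $$ (i,j))) = mat m m (\<lambda>(p,q). \<Sum>k\<in>I. c k * f (Ms k) $$ (p,q))"
  using fin Ms
proof (induction I rule: finite_induct)
  case empty
  have z: "mat n n (\<lambda>(i,j). \<Sum>k\<in>{}. c k * Ms k $$ (i,j)) = 0 \<cdot>\<^sub>m (0\<^sub>m n n)"
    by (rule eq_matI) auto
  have "\<forall>c. f (c \<cdot>\<^sub>m (0\<^sub>m n n)) = c \<cdot>\<^sub>m f (0\<^sub>m n n)" using lin unfolding linmap_def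
    using zero_carrier_mat by blast
  hence e: "f (0\<^sub>m n n) = 0 \<cdot>\<^sub>m f (0\<^sub>m n n)" by simp
  have fc: "f (0\<^sub>m n n) \<in> carrier_mat m m" using lin unfolding linmap_def by auto
  have "f (0\<^sub>m n n) $$ (i,j) = 0" if "i < m" "j < m" for i j
  proof -
    have "(0 \<cdot>\<^sub>m f (0\<^sub>m n n)) $$ (i,j) = 0" using fc that by simp
    thus ?thesis using e by metis
  qed
  moreover have "0 \<cdot>\<^sub>m (0\<^sub>m n n) = (0\<^sub>m n n :: complex mat)" by auto
  ultimately show ?case unfolding z using fc by (intro eq_matI) auto
next
  case (insert k I)
  let ?M = "mat n n (\<lambda>(i,j). \<Sum>k\<in>I. c k * Ms k $$ (i,j))"
  have Mk: "Ms k \<in> carrier_mat n n" using insert by auto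
  have d: "mat n n (\<lambda>(i,j). \<Sum>k\<in>insert k I. c k * Ms k $$ (i,j)) = c k \<cdot>\<^sub>m Ms k + ?M"
    using insert Mk by (intro eq_matI) auto
  have "f (c k \<cdot>\<^sub>m Ms k + ?M) = c k \<cdot>\<^sub>m f (Ms k) + f ?M"
    using lin Mk unfolding linmap_def by auto
  moreover have "f ?M = mat m m (\<lambda>(p,q). \<Sum>k\<in>I. c k * f (Ms k) $$ (p,q))" using insert by (simp add: case_prod_unfold)
  moreover have "f (Ms k) \<in> carrier_mat m m" using lin Mk unfolding linmap_def by auto
  ultimately show ?case unfolding d using insert by (intro eq_matI) auto
qed

lemma delta2: fixes i j n :: nat assumes "i < n" "j < n"
  shows "(\<Sum>a<n. \<Sum>b<n. t a b * (if i = a \<and> j = b then 1 else (0::complex))) = t i j"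
proof -
  have "(\<Sum>a<n. \<Sum>b<n. t a b * (if i = a \<and> j = b then 1 else (0::complex))) = (\<Sum>a<n. if a = i then (\<Sum>b<n. if b = j then t a b else 0) else 0)"
  proof (rule sum.cong[OF refl])
    fix a show "(\<Sum>b<n. t a b * (if i = a \<and> j = b then 1 else (0::complex))) = (if a = i then (\<Sum>b<n. if b = j then t a b else 0) else 0)"
    proof (cases "a = i")
      case True
      have "(\<Sum>b<n. t a b * (if i = a \<and> j = b then 1 else (0::complex))) = (\<Sum>b<n. if b = j then t a b else 0)"
        using True by (intro sum.cong) auto
      thus ?thesis using True by simp
    qed simp
  qed
  also have "\<dots> = t i j" using assms by simp
  finally show ?thesis .
qed

definition rk1 :: "nat \<Rightarrow> (nat \<Rightarrow> complex) \<Rightarrow> complex mat" where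
  "rk1 n v = mat n n (\<lambda>(i,j). v i * cnj (v j))"

lemma rk1_psd: "psd n (rk1 n v)"
proof (rule psdI)
  fix w :: "complex vec" assume "w \<in> carrier_vec n"
  define s where "s = (\<Sum>i<n. cnj (w $ i) * v i)"
  have "(\<Sum>i<n. \<Sum>j<n. cnj (w $ i) * rk1 n v $$ (i,j) * w $ j) = (\<Sum>i<n. \<Sum>j<n. (cnj (w $ i) * v i) * cnj (cnj (w $ j) * v j))"
    by (simp add: rk1_def mult.assoc mult.commute mult.left_commute)
  also have "\<dots> = s * cnj s" unfolding s_def by (simp add: sum_distrib_left sum_distrib_right cnj_sum, rule sum.swap)
  also have "\<dots> = of_real ((cmod s)^2)" by (rule complex_norm_square[symmetric])
  finally show "\<exists>r::real. r \<ge> 0 \<and> (\<Sum>i<n. \<Sum>j<n. cnj (w $ i) * rk1 n v $$ (i,j) * w $ j) = of_real r" by (intro exI[of _ "(cmod s)^2"]) simp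
qed (simp add: rk1_def)

lemma polar4: "(\<Sum>k<4. \<i>^k * ((if i=a then 1 else 0) + \<i>^k*(if i=b then 1 else 0)) * cnj ((if j=a then 1 else 0) + \<i>^k * (if j = b then 1 else 0)))
   = (4::complex) * (if i = a \<and> j = b then 1 else 0)"
  by (simp add: numeral_eq_Suc power_Suc)

lemma psd_scale: assumes "psd n X" "(c::real) \<ge> 0" shows "psd n (of_real c \<cdot>\<^sub>m X)"
proof (rule psdI)
  fix v :: "complex vec" assume v: "v \<in> carrier_vec n"
  obtain r where r: "r \<ge> 0" "(\<Sum>i<n. \<Sum>j<n. cnj (v $ i) * X $$ (i,j) * v $ j) = of_real r" using psdD[OF assms(1) v] by blast
  have X: "X \<in> carrier_mat n n" using assms(1) psd_carrier by blast
  have "(\<Sum>i<n. \<Sum>j<n. cnj (v $ i) * (of_real c \<cdot>\<^sub>m X) $$ (i,j) * v $ j) = of_real c * (\<Sum>i<n. \<Sum>j<n. cnj (v $ i) * X $$ (i,j) * v $ j)"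
    using X by (simp add: sum_distrib_left mult.assoc mult.commute mult.left_commute)
  also have "\<dots> = of_real (c * r)" using r by simp
  finally show "\<exists>r::real. r \<ge> 0 \<and> (\<Sum>i<n. \<Sum>j<n. cnj (v $ i) * (of_real c \<cdot>\<^sub>m X) $$ (i,j) * v $ j) = of_real r"
    using r assms(2) by (intro exI[of _ "c*r"]) simp
qed (use assms psd_carrier in auto)

lemma linmap_zero: fixes f :: "complex mat \<Rightarrow> complex mat" assumes "linmap n m f" shows "f (0\<^sub>m n n) = 0\<^sub>m m m"
proof -
  have "\<forall>c. f (c \<cdot>\<^sub>m (0\<^sub>m n n)) = c \<cdot>\<^sub>m f (0\<^sub>m n n)" using assms unfolding linmap_def
    using zero_carrier_mat by blast
  hence e: "f (0\<^sub>m n n) = 0 \<cdot>\<^sub>m f (0\<^sub>m n n)" by simp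
  have fc: "f (0\<^sub>m n n) \<in> carrier_mat m m" using assms unfolding linmap_def by auto
  show ?thesis
  proof (rule eq_matI)
    fix i j assume "i < dim_row (0\<^sub>m m m :: complex mat)" "j < dim_col (0\<^sub>m m m :: complex mat)"
    hence "(0 \<cdot>\<^sub>m f (0\<^sub>m n n)) $$ (i,j) = 0" using fc by simp
    thus "f (0\<^sub>m n n) $$ (i,j) = 0\<^sub>m m m $$ (i,j)" using e \<open>i < _\<close> \<open>j < _\<close> by (metis index_zero_mat(1) dim_row_mat(1) index_zero_mat(2) index_zero_mat(3))
  qed (use fc in auto)
qed

lemma agree_rk1:
  assumes f: "linmap n m f" and g: "linmap n m g" and eq: "\<forall>\<rho>. density n \<rho> \<longrightarrow> f \<rho> = g \<rho>"
  shows "f (rk1 n v) = g (rk1 n v)"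
proof (cases "(\<Sum>i<n. v i * cnj (v i)) = 0")
  case True
  have "\<forall>i\<in>{..<n}. v i * cnj (v i) = 0"
  proof (rule ccontr)
    assume "\<not> (\<forall>i\<in>{..<n}. v i * cnj (v i) = 0)"
    then obtain i0 where i0: "i0 < n" "v i0 * cnj (v i0) \<noteq> 0" by auto
    have "Re (\<Sum>i<n. v i * cnj (v i)) = (\<Sum>i<n. (cmod (v i))^2)" by (simp add: complex_mult_cnj cmod_power2)
    also have "\<dots> > 0"
    proof (rule sum_pos2[of _ i0])
      have "v i0 \<noteq> 0" using i0 by auto
      thus "(cmod (v i0))^2 > 0" by simp
    qed (use i0 in auto)
    finally show False using True by simp
  qed
  hence z: "rk1 n v = 0\<^sub>m n n" unfolding rk1_def by (intro eq_matI) auto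
  show ?thesis unfolding z using linmap_zero[OF f] linmap_zero[OF g] by simp
next
  case False
  define t where "t = (\<Sum>i<n. v i * cnj (v i))"
  define tr where "tr = (\<Sum>i<n. (cmod (v i))^2)"
  have t: "t = of_real tr" unfolding t_def tr_def by (simp only: of_real_sum complex_norm_square)
  have tr0: "tr \<ge> 0" unfolding tr_def by (simp add: sum_nonneg)
  have tr1: "tr \<noteq> 0" using False t t_def by auto
  have tr: "tr > 0" using tr0 tr1 by linarith
  define \<rho> where "\<rho> = of_real (1/tr) \<cdot>\<^sub>m rk1 n v"
  have "density n \<rho>" unfolding density_def \<rho>_def
  proof
    show "psd n (of_real (1/tr) \<cdot>\<^sub>m rk1 n v)" using rk1_psd tr by (intro psd_scale) auto
    have "mtrace (of_real (1/tr) \<cdot>\<^sub>m rk1 n v) = of_real (1/tr) * t"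
      unfolding mtrace_def t_def rk1_def by (simp add: sum_distrib_left)
    thus "mtrace (of_real (1/tr) \<cdot>\<^sub>m rk1 n v) = 1" using t tr by simp
  qed
  hence fg: "f \<rho> = g \<rho>" using eq by blast
  have r: "rk1 n v = of_real tr \<cdot>\<^sub>m \<rho>" unfolding \<rho>_def rk1_def using tr by (intro eq_matI) auto
  have rc: "\<rho> \<in> carrier_mat n n" unfolding \<rho>_def rk1_def by simp
  have "f (of_real tr \<cdot>\<^sub>m \<rho>) = of_real tr \<cdot>\<^sub>m f \<rho>" using f rc unfolding linmap_def by blast
  moreover have "g (of_real tr \<cdot>\<^sub>m \<rho>) = of_real tr \<cdot>\<^sub>m g \<rho>" using g rc unfolding linmap_def by blast
  ultimately show ?thesis unfolding r using fg by simp
qed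

lemma agree_density:
  assumes f: "linmap n m f" and g: "linmap n m g" and eq: "\<forall>\<rho>. density n \<rho> \<longrightarrow> f \<rho> = g \<rho>"
    and tau: "\<tau> \<in> carrier_mat n n"
  shows "f \<tau> = g \<tau>"
proof -
  define I where "I = {..<n} \<times> ({..<n} \<times> {..<4::nat})"
  define vv where "vv x = (\<lambda>i. (if i = fst x then 1 else 0) + \<i>^(snd (snd x)) * (if i = fst (snd x) then 1 else 0))" for x :: "nat \<times> nat \<times> nat"
  define cc where "cc x = \<tau> $$ (fst x, fst (snd x)) * \<i>^(snd (snd x)) / 4" for x :: "nat \<times> nat \<times> nat"
  have fin: "finite I" unfolding I_def by simp
  have car: "\<forall>x\<in>I. rk1 n (vv x) \<in> carrier_mat n n" by (simp add: rk1_def)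
  have rep: "\<tau> = mat n n (\<lambda>(i,j). \<Sum>x\<in>I. cc x * rk1 n (vv x) $$ (i,j))"
  proof (rule eq_matI)
    fix i j assume "i < dim_row (mat n n (\<lambda>(i,j). \<Sum>x\<in>I. cc x * rk1 n (vv x) $$ (i,j)))"
      "j < dim_col (mat n n (\<lambda>(i,j). \<Sum>x\<in>I. cc x * rk1 n (vv x) $$ (i,j)))"
    hence i: "i < n" and j: "j < n" by auto
    have "(\<Sum>x\<in>I. cc x * rk1 n (vv x) $$ (i,j)) = (\<Sum>a<n. \<Sum>b<n. \<Sum>k<4. cc (a,b,k) * (vv (a,b,k) i * cnj (vv (a,b,k) j)))"
      unfolding I_def using i j by (simp add: rk1_def sum.cartesian_product)
    also have "\<dots> = (\<Sum>a<n. \<Sum>b<n. \<tau> $$ (a,b) * (if i = a \<and> j = b then 1 else 0))"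
    proof (rule sum.cong[OF refl], rule sum.cong[OF refl])
      fix a b
      have "(\<Sum>k<4. cc (a,b,k) * (vv (a,b,k) i * cnj (vv (a,b,k) j))) =
        \<tau> $$ (a,b) / 4 * (\<Sum>k<4. \<i>^k * ((if i=a then 1 else 0) + \<i>^k*(if i=b then 1 else 0)) * cnj ((if j=a then 1 else 0) + \<i>^k * (if j = b then 1 else 0)))"
        unfolding cc_def vv_def by (simp add: sum_distrib_left mult.assoc mult.commute mult.left_commute)
      also have "\<dots> = \<tau> $$ (a,b) * (if i = a \<and> j = b then 1 else 0)" unfolding polar4 by simp
      finally show "(\<Sum>k<4. cc (a,b,k) * (vv (a,b,k) i * cnj (vv (a,b,k) j))) = \<tau> $$ (a,b) * (if i = a \<and> j = b then 1 else 0)" .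
    qed
    also have "\<dots> = \<tau> $$ (i,j)" by (rule delta2[OF i j])
    finally show "\<tau> $$ (i,j) = mat n n (\<lambda>(i,j). \<Sum>x\<in>I. cc x * rk1 n (vv x) $$ (i,j)) $$ (i,j)" using i j by simp
  qed (use tau in auto)
  have "f \<tau> = mat m m (\<lambda>(p,q). \<Sum>x\<in>I. cc x * f (rk1 n (vv x)) $$ (p,q))"
    by (subst rep, rule lin_sum[OF f fin car])
  also have "\<dots> = mat m m (\<lambda>(p,q). \<Sum>x\<in>I. cc x * g (rk1 n (vv x)) $$ (p,q))"
    using agree_rk1[OF f g eq] by simp
  also have "\<dots> = g \<tau>"
    by (subst rep, rule lin_sum[OF g fin car, symmetric])
  finally show ?thesis .
qed



lemma unif_carrier[simp]: "unif d \<in> carrier_mat d d" "dim_row (unif d) = d" "dim_col (unif d) = d"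
  by (simp_all add: unif_def)
lemma unif_entry: "i < d \<Longrightarrow> j < d \<Longrightarrow> unif d $$ (i,j) = (if i = j then 1 / of_nat d else 0)"
  by (simp add: unif_def)
lemma kron_dim[simp]: "dim_row (kron A B) = dim_row A * dim_row B" "dim_col (kron A B) = dim_col A * dim_col B"
  by (simp_all add: kron_def)
lemma kron_carrier: "A \<in> carrier_mat n n' \<Longrightarrow> B \<in> carrier_mat m m' \<Longrightarrow> kron A B \<in> carrier_mat (n*m) (n'*m')"
  by (simp add: kron_def)
lemma kron_index: "A \<in> carrier_mat n n' \<Longrightarrow> B \<in> carrier_mat m m' \<Longrightarrow> i < n*m \<Longrightarrow> j < n'*m' \<Longrightarrow>
  kron A B $$ (i,j) = A $$ (i div m, j div m') * B $$ (i mod m, j mod m')"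
  by (simp add: kron_def)
lemma ptrace_carrier[simp]: "ptrace_first dB dC X \<in> carrier_mat dC dC"
  "dim_row (ptrace_first dB dC X) = dC" "dim_col (ptrace_first dB dC X) = dC"
  by (simp_all add: ptrace_first_def)
lemma ptrace_index: "i < dC \<Longrightarrow> j < dC \<Longrightarrow> ptrace_first dB dC X $$ (i,j) = (\<Sum>k<dB. X $$ (k*dC + i, k*dC + j))"
  by (simp add: ptrace_first_def)
lemma tensor_id_dim[simp]: "dim_row (tensor_id dIn dOut \<Phi> dC X) = dOut*dC" "dim_col (tensor_id dIn dOut \<Phi> dC X) = dOut*dC"
  "tensor_id dIn dOut \<Phi> dC X \<in> carrier_mat (dOut*dC) (dOut*dC)"
  by (simp_all add: tensor_id_def)
lemma tensor_id_index: "r < dOut*dC \<Longrightarrow> s < dOut*dC \<Longrightarrow> tensor_id dIn dOut \<Phi> dC X $$ (r,s) =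
   \<Phi> (mat dIn dIn (\<lambda>(i,j). X $$ (i*dC + r mod dC, j*dC + s mod dC))) $$ (r div dC, s div dC)"
  by (simp add: tensor_id_def)
lemma mtrace_unif: "0 < d \<Longrightarrow> mtrace (unif d) = 1"
  by (simp add: mtrace_def unif_def)

lemma superch_ext_dim[simp]: "dim_row (superch_ext dA' dA dB dR V E dC0 dC1 N X) = dB*dC1"
  "dim_col (superch_ext dA' dA dB dR V E dC0 dC1 N X) = dB*dC1"
  by (simp_all add: superch_ext_def)

lemma T2_index:
  assumes i: "i < dR*dB" and j: "j < dR*dB" and c: "c < dC1" and c': "c' < dC1"
  shows "id_tensor dR dIn (dB*dC1) N T $$ (i*dC1 + c, j*dC1 + c') =
     N (mat dIn dIn (\<lambda>(k,l). T $$ ((i div dB)*dIn + k, (j div dB)*dIn + l))) $$ ((i mod dB)*dC1 + c, (j mod dB)*dC1 + c')"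
proof -
  have a: "i*dC1 + c < dR*(dB*dC1)" using idx_lt[OF i c] by (simp add: mult.assoc)
  have b: "j*dC1 + c' < dR*(dB*dC1)" using idx_lt[OF j c'] by (simp add: mult.assoc)
  show ?thesis unfolding id_tensor_index[OF a b] using c c' by (simp add: divmod1 divmod2)
qed

lemma dir31:
  assumes linE: "linmap (dR*dB) dB E"
    and key: "\<forall>\<tau>\<in>carrier_mat dR dR. E (kron \<tau> (unif dB)) = mtrace \<tau> \<cdot>\<^sub>m unif dB"
    and dB: "0 < dB" and dC1: "0 < dC1"
    and N: "marg_uniform (dA*dC0) dB dC1 N"
  shows "marg_uniform (dA'*dC0) dB dC1 (superch_ext dA' dA dB dR V E dC0 dC1 N)"
  unfolding marg_uniform_def
proof (intro ballI)
  fix X :: "complex mat" assume X: "X \<in> carrier_mat (dA'*dC0) (dA'*dC0)"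
  define T1 where "T1 = tensor_id dA' (dR*dA) (\<lambda>Y. V * Y * adj V) dC0 X"
  define T2 where "T2 = id_tensor dR (dA*dC0) (dB*dC1) N T1"
  define F where "F = superch_ext dA' dA dB dR V E dC0 dC1 N X"
  define P where "P a a' = ptrace_first dB dC1 (N (mat (dA*dC0) (dA*dC0) (\<lambda>(k,l). T1 $$ (a*(dA*dC0) + k, a'*(dA*dC0) + l))))" for a a'
  define tau where "tau c c' = mat dR dR (\<lambda>(a,a'). P a a' $$ (c,c'))" for c c'
  have Fidx: "F $$ (r,s) = mtrace (tau (r mod dC1) (s mod dC1)) * unif dB $$ (r div dC1, s div dC1)"
    if r: "r < dB*dC1" and s: "s < dB*dC1" for r s
  proof -
    let ?c = "r mod dC1" and ?c' = "s mod dC1"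
    have c: "?c < dC1" and c': "?c' < dC1" using dC1 by auto
    have M: "mat (dR*dB) (dR*dB) (\<lambda>(i,j). T2 $$ (i*dC1 + ?c, j*dC1 + ?c')) = kron (tau ?c ?c') (unif dB)"
    proof (rule eq_matI)
      fix i j assume "i < dim_row (kron (tau ?c ?c') (unif dB))" "j < dim_col (kron (tau ?c ?c') (unif dB))"
      hence i: "i < dR*dB" and j: "j < dR*dB" by (simp_all add: tau_def)
      let ?B = "mat (dA*dC0) (dA*dC0) (\<lambda>(k,l). T1 $$ ((i div dB)*(dA*dC0) + k, (j div dB)*(dA*dC0) + l))"
      have NB: "N ?B = kron (unif dB) (ptrace_first dB dC1 (N ?B))" using N unfolding marg_uniform_def by simp
      have im: "i mod dB < dB" "j mod dB < dB" using dB by auto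
      have "T2 $$ (i*dC1 + ?c, j*dC1 + ?c') = N ?B $$ ((i mod dB)*dC1 + ?c, (j mod dB)*dC1 + ?c')"
        unfolding T2_def by (rule T2_index[OF i j c c'])
      also have "\<dots> = unif dB $$ (i mod dB, j mod dB) * P (i div dB) (j div dB) $$ (?c, ?c')"
        apply (subst NB)
        apply (subst kron_index[of _ dB dB _ dC1 dC1])
        using idx_lt[OF im(1) c] idx_lt[OF im(2) c'] c c' by (simp_all add: P_def)
      finally show "mat (dR*dB) (dR*dB) (\<lambda>(i,j). T2 $$ (i*dC1 + ?c, j*dC1 + ?c')) $$ (i,j) = kron (tau ?c ?c') (unif dB) $$ (i,j)"
        using i j div_lt[OF i] div_lt[OF j] im
        by (simp add: kron_index[of _ dR dR _ dB dB] tau_def)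
    qed (simp_all add: tau_def)
    have "F $$ (r,s) = E (mat (dR*dB) (dR*dB) (\<lambda>(i,j). T2 $$ (i*dC1 + ?c, j*dC1 + ?c'))) $$ (r div dC1, s div dC1)"
      unfolding F_def superch_ext_def T2_def T1_def using r s by (simp add: tensor_id_index)
    also have "\<dots> = (mtrace (tau ?c ?c') \<cdot>\<^sub>m unif dB) $$ (r div dC1, s div dC1)"
      unfolding M using key by (simp add: tau_def)
    also have "\<dots> = mtrace (tau ?c ?c') * unif dB $$ (r div dC1, s div dC1)"
      using div_lt[OF r] div_lt[OF s] by simp
    finally show ?thesis .
  qed
  show "F = kron (unif dB) (ptrace_first dB dC1 F)"
  proof (rule eq_matI)
    fix r s assume "r < dim_row (kron (unif dB) (ptrace_first dB dC1 F))" "s < dim_col (kron (unif dB) (ptrace_first dB dC1 F))"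
    hence r: "r < dB*dC1" and s: "s < dB*dC1" by simp_all
    have c: "r mod dC1 < dC1" "s mod dC1 < dC1" using dC1 by auto
    have "ptrace_first dB dC1 F $$ (r mod dC1, s mod dC1) = (\<Sum>k<dB. F $$ (k*dC1 + r mod dC1, k*dC1 + s mod dC1))"
      using c by (simp add: ptrace_index)
    also have "\<dots> = (\<Sum>k<dB. mtrace (tau (r mod dC1) (s mod dC1)) * (1 / of_nat dB))"
    proof (rule sum.cong[OF refl])
      fix k assume k: "k \<in> {..<dB}"
      have a: "k*dC1 + r mod dC1 < dB*dC1" "k*dC1 + s mod dC1 < dB*dC1" using k c idx_lt by auto
      show "F $$ (k*dC1 + r mod dC1, k*dC1 + s mod dC1) = mtrace (tau (r mod dC1) (s mod dC1)) * (1 / of_nat dB)"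
        using Fidx[OF a] k c by (simp add: unif_entry)
    qed
    also have "\<dots> = mtrace (tau (r mod dC1) (s mod dC1))" using dB by simp
    finally show "F $$ (r,s) = kron (unif dB) (ptrace_first dB dC1 F) $$ (r,s)"
      using Fidx[OF r s] r s by (simp add: kron_index[of _ dB dB _ dC1 dC1] mult.commute)
  qed (simp_all add: F_def)
qed



lemma kron_add_left: "X \<in> carrier_mat n n \<Longrightarrow> Y \<in> carrier_mat n n \<Longrightarrow> B \<in> carrier_mat m m \<Longrightarrow>
  kron (X + Y) B = kron X B + kron Y B"
  by (intro eq_matI) (auto simp: kron_def algebra_simps less_mult_imp_div_less)
lemma kron_smult_left: "X \<in> carrier_mat n n \<Longrightarrow> B \<in> carrier_mat m m \<Longrightarrow>
  kron (c \<cdot>\<^sub>m X) B = c \<cdot>\<^sub>m kron X B"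
  by (intro eq_matI) (auto simp: kron_def algebra_simps less_mult_imp_div_less)

lemma linmap_kron: assumes "linmap (dR*dB) dB E" shows "linmap dR dB (\<lambda>\<tau>. E (kron \<tau> (unif dB)))"
  using assms unfolding linmap_def
  by (auto simp: kron_add_left[of _ dR _ _ dB] kron_smult_left[of _ dR _ dB] kron_carrier)

lemma linmap_tr: "linmap dR dB (\<lambda>\<tau>. mtrace \<tau> \<cdot>\<^sub>m unif dB)"
  unfolding linmap_def mtrace_def
  by (auto intro!: eq_matI simp: sum.distrib sum_distrib_left algebra_simps)

lemma key_of_cond_unital:
  assumes E: "linmap (dR*dB) dB E" and cu: "cond_unital dR dB E"
  shows "\<forall>\<tau>\<in>carrier_mat dR dR. E (kron \<tau> (unif dB)) = mtrace \<tau> \<cdot>\<^sub>m unif dB"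
proof
  fix \<tau> :: "complex mat" assume \<tau>: "\<tau> \<in> carrier_mat dR dR"
  show "E (kron \<tau> (unif dB)) = mtrace \<tau> \<cdot>\<^sub>m unif dB"
  proof (rule agree_density[OF linmap_kron[OF E] linmap_tr _ \<tau>, rule_format])
    fix \<rho> assume "density dR \<rho>"
    thus "E (kron \<rho> (unif dB)) = mtrace \<rho> \<cdot>\<^sub>m unif dB"
      using cu unfolding cond_unital_def density_def by (auto intro!: eq_matI)
  qed
qed

lemma dir3_1:
  assumes E: "CPTP (dR*dB) dB E" and cu: "cond_unital dR dB E" and dB: "0 < dB"
  shows "compl_unif_preserving dA' dA dB dR V E"
  unfolding compl_unif_preserving_def
proof (intro allI impI)
  fix dC0 dC1 N assume a: "0 < dC0 \<and> 0 < dC1 \<and> CPTP (dA*dC0) (dB*dC1) N \<and> marg_uniform (dA*dC0) dB dC1 N"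
  show "marg_uniform (dA'*dC0) dB dC1 (superch_ext dA' dA dB dR V E dC0 dC1 N)"
    by (rule dir31[OF CPTP_linmap[OF E] key_of_cond_unital[OF CPTP_linmap[OF E] cu] dB]) (use a in auto)
qed

lemma N0_marg: assumes dB: "0 < dB" shows "marg_uniform dA dB dA (\<lambda>X. kron (unif dB) X)"
  unfolding marg_uniform_def
proof
  fix X :: "complex mat" assume X: "X \<in> carrier_mat dA dA"
  have "ptrace_first dB dA (kron (unif dB) X) = X"
  proof (rule eq_matI)
    fix i j assume "i < dim_row X" "j < dim_col X"
    hence i: "i < dA" and j: "j < dA" using X by auto
    have "ptrace_first dB dA (kron (unif dB) X) $$ (i,j) = (\<Sum>k<dB. kron (unif dB) X $$ (k*dA + i, k*dA + j))"
      using i j by (simp add: ptrace_index)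
    also have "\<dots> = (\<Sum>k<dB. (1 / of_nat dB) * X $$ (i,j))"
    proof (rule sum.cong[OF refl])
      fix k assume k: "k \<in> {..<dB}"
      have a: "k*dA + i < dB*dA" "k*dA + j < dB*dA" using k i j idx_lt by auto
      show "kron (unif dB) X $$ (k*dA + i, k*dA + j) = (1 / of_nat dB) * X $$ (i,j)"
        using k i j by (simp add: kron_index[OF unif_carrier(1) X a] unif_entry)
    qed
    also have "\<dots> = X $$ (i,j)" using dB by simp
    finally show "ptrace_first dB dA (kron (unif dB) X) $$ (i,j) = X $$ (i,j)" .
  qed (use X in auto)
  thus "kron (unif dB) X = kron (unif dB) (ptrace_first dB dA (kron (unif dB) X))" by simp
qed

lemma N0_kraus: assumes dB: "0 < dB" and Y: "Y \<in> carrier_mat dA dA"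
  shows "kron (unif dB) Y = mat (dB*dA) (dB*dA) (\<lambda>(p,q). \<Sum>b<dB. \<Sum>k<dA. \<Sum>l<dA.
     (if p div dA = b \<and> p mod dA = k then of_real (1 / sqrt (real dB)) else 0) * Y $$ (k,l) *
     cnj (if q div dA = b \<and> q mod dA = l then of_real (1 / sqrt (real dB)) else 0))"
proof (rule eq_matI)
  fix p q assume "p < dim_row (mat (dB*dA) (dB*dA) (\<lambda>(p,q). \<Sum>b<dB. \<Sum>k<dA. \<Sum>l<dA.
     (if p div dA = b \<and> p mod dA = k then of_real (1 / sqrt (real dB)) else 0) * Y $$ (k,l) *
     cnj (if q div dA = b \<and> q mod dA = l then of_real (1 / sqrt (real dB)) else 0)))"
   "q < dim_col (mat (dB*dA) (dB*dA) (\<lambda>(p,q). \<Sum>b<dB. \<Sum>k<dA. \<Sum>l<dA.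
     (if p div dA = b \<and> p mod dA = k then of_real (1 / sqrt (real dB)) else 0) * Y $$ (k,l) *
     cnj (if q div dA = b \<and> q mod dA = l then of_real (1 / sqrt (real dB)) else 0)))"
  hence p: "p < dB*dA" and q: "q < dB*dA" by auto
  have pm: "p mod dA < dA" "q mod dA < dA" using p q mod_lt by auto
  have pd: "p div dA < dB" "q div dA < dB" using p q div_lt by auto
  define c :: complex where "c = of_real (1 / sqrt (real dB))"
  have s2: "(1 / sqrt (real dB))^2 = 1 / real dB" using dB by (simp add: power_divide)
  have "c * cnj c = of_real ((1 / sqrt (real dB))^2)" unfolding c_def by (simp only: complex_cnj_complex_of_real of_real_power power2_eq_square of_real_mult)
  hence cc: "c * cnj c = 1 / of_nat dB" unfolding s2 by simp
  have "(\<Sum>b<dB. \<Sum>k<dA. \<Sum>l<dA. (if p div dA = b \<and> p mod dA = k then c else 0) * Y $$ (k,l) *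
     cnj (if q div dA = b \<and> q mod dA = l then c else 0))
     = (\<Sum>b<dB. if b = p div dA then (\<Sum>l<dA. c * Y $$ (p mod dA, l) * cnj (if q div dA = b \<and> q mod dA = l then c else 0)) else 0)"
  proof (rule sum.cong[OF refl])
    fix b show "(\<Sum>k<dA. \<Sum>l<dA. (if p div dA = b \<and> p mod dA = k then c else 0) * Y $$ (k,l) *
     cnj (if q div dA = b \<and> q mod dA = l then c else 0)) = (if b = p div dA then (\<Sum>l<dA. c * Y $$ (p mod dA, l) * cnj (if q div dA = b \<and> q mod dA = l then c else 0)) else 0)"
    proof (cases "b = p div dA")
      case True
      have "(\<Sum>k<dA. \<Sum>l<dA. (if p div dA = b \<and> p mod dA = k then c else 0) * Y $$ (k,l) *
       cnj (if q div dA = b \<and> q mod dA = l then c else 0)) = (\<Sum>k<dA. if k = p mod dA then (\<Sum>l<dA. c * Y $$ (k,l) *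
       cnj (if q div dA = b \<and> q mod dA = l then c else 0)) else 0)"
        using True by (intro sum.cong) auto
      thus ?thesis using True pm by simp
    qed simp
  qed
  also have "\<dots> = (\<Sum>l<dA. c * Y $$ (p mod dA, l) * cnj (if q div dA = p div dA \<and> q mod dA = l then c else 0))"
    using pd by simp
  also have "\<dots> = (\<Sum>l<dA. if l = q mod dA then (if q div dA = p div dA then c * cnj c * Y $$ (p mod dA, l) else 0) else 0)"
    by (rule sum.cong[OF refl]) auto
  also have "\<dots> = (if p div dA = q div dA then (1 / of_nat dB) * Y $$ (p mod dA, q mod dA) else 0)"
    using pm cc by auto
  also have "\<dots> = kron (unif dB) Y $$ (p,q)"
    using p q pd by (simp add: kron_index[OF unif_carrier(1) Y] unif_entry)
  finally show "kron (unif dB) Y $$ (p,q) = mat (dB*dA) (dB*dA) (\<lambda>(p,q). \<Sum>b<dB. \<Sum>k<dA. \<Sum>l<dA.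
     (if p div dA = b \<and> p mod dA = k then of_real (1 / sqrt (real dB)) else 0) * Y $$ (k,l) *
     cnj (if q div dA = b \<and> q mod dA = l then of_real (1 / sqrt (real dB)) else 0)) $$ (p,q)"
    using p q unfolding c_def by simp
qed (use Y in auto)

lemma kron_add_right: "X \<in> carrier_mat n n \<Longrightarrow> Y \<in> carrier_mat n n \<Longrightarrow> B \<in> carrier_mat m m \<Longrightarrow>
  kron B (X + Y) = kron B X + kron B Y"
  by (intro eq_matI) (auto simp: kron_def algebra_simps less_mult_imp_div_less mod_lt)
lemma kron_smult_right: "X \<in> carrier_mat n n \<Longrightarrow> B \<in> carrier_mat m m \<Longrightarrow>
  kron B (c \<cdot>\<^sub>m X) = c \<cdot>\<^sub>m kron B X"
  by (intro eq_matI) (auto simp: kron_def algebra_simps less_mult_imp_div_less mod_lt)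

lemma mtrace_kron: assumes A: "A \<in> carrier_mat n n" and B: "B \<in> carrier_mat m m"
  shows "mtrace (kron A B) = mtrace A * mtrace B"
proof -
  have "mtrace (kron A B) = (\<Sum>a<n. \<Sum>b<m. kron A B $$ (a*m+b, a*m+b))"
    unfolding mtrace_def using A B by (simp add: sum_split)
  also have "\<dots> = (\<Sum>a<n. \<Sum>b<m. A $$ (a,a) * B $$ (b,b))"
  proof (rule sum.cong[OF refl], rule sum.cong[OF refl])
    fix a b assume "a \<in> {..<n}" "b \<in> {..<m}"
    hence i: "a*m+b < n*m" and b: "b < m" using idx_lt by auto
    show "kron A B $$ (a*m+b, a*m+b) = A $$ (a,a) * B $$ (b,b)"
      using kron_index[OF A B i i] b by simp
  qed
  also have "\<dots> = mtrace A * mtrace B" unfolding mtrace_def using A B by (simp add: sum_product)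
  finally show ?thesis .
qed

lemma N0_CPTP: assumes dB: "0 < dB" shows "CPTP dA (dB*dA) (\<lambda>X. kron (unif dB) X)"
  unfolding CPTP_def
proof (intro conjI ballI allI impI)
  fix X :: "complex mat" assume X: "X \<in> carrier_mat dA dA"
  show "kron (unif dB) X \<in> carrier_mat (dB*dA) (dB*dA)" using kron_carrier[OF unif_carrier(1) X] .
  show "mtrace (kron (unif dB) X) = mtrace X" using mtrace_kron[OF unif_carrier(1) X] mtrace_unif[OF dB] by simp
  fix c show "kron (unif dB) (c \<cdot>\<^sub>m X) = c \<cdot>\<^sub>m kron (unif dB) X" using kron_smult_right[OF X unif_carrier(1)] .
next
  fix X Y :: "complex mat" assume "X \<in> carrier_mat dA dA" "Y \<in> carrier_mat dA dA"
  thus "kron (unif dB) (X + Y) = kron (unif dB) X + kron (unif dB) Y" using kron_add_right unif_carrier(1) by blast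
next
  fix n :: nat and X assume "0 < n" "psd (n*dA) X"
  show "psd (n*(dB*dA)) (id_tensor n dA (dB*dA) (\<lambda>X. kron (unif dB) X) X)"
    by (rule kraus_CP[where K=dB and J="\<lambda>b p k. if p div dA = b \<and> p mod dA = k then of_real (1 / sqrt (real dB)) else 0"])
       (use N0_kraus[OF dB] \<open>psd (n*dA) X\<close> in auto)
qed

lemma dir1_2:
  assumes cup: "compl_unif_preserving dA' dA dB dR V E" and dB: "0 < dB" and dA: "0 < dA"
  shows "marg_uniform dA' dB dA (superch_ext dA' dA dB dR V E 1 dA (\<lambda>X. kron (unif dB) X))"
proof -
  have "marg_uniform (dA'*1) dB dA (superch_ext dA' dA dB dR V E 1 dA (\<lambda>X. kron (unif dB) X))"
  proof -
    have H: "\<And>dC0 dC1 N. 0 < dC0 \<and> 0 < dC1 \<and> CPTP (dA*dC0) (dB*dC1) N \<and> marg_uniform (dA*dC0) dB dC1 N \<Longrightarrow>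
      marg_uniform (dA'*dC0) dB dC1 (superch_ext dA' dA dB dR V E dC0 dC1 N)"
      using cup unfolding compl_unif_preserving_def by blast
    show ?thesis by (rule H) (use N0_CPTP[OF dB, of dA] N0_marg[OF dB, of dA] dA in simp)
  qed
  thus ?thesis by simp
qed


definition tauN where "tauN dA' dA dB dR V dC0 dC1 N X c c' = mat dR dR (\<lambda>(a,a'). ptrace_first dB dC1
   (N (mat (dA*dC0) (dA*dC0) (\<lambda>(k,l). tensor_id dA' (dR*dA) (\<lambda>Y. V*Y*adj V) dC0 X $$ (a*(dA*dC0)+k, a'*(dA*dC0)+l)))) $$ (c,c'))"

lemma superch_ext_index:
  assumes dB: "0 < dB" and dC1: "0 < dC1" and N: "marg_uniform (dA*dC0) dB dC1 N"
    and r: "r < dB*dC1" and s: "s < dB*dC1"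
  shows "superch_ext dA' dA dB dR V E dC0 dC1 N X $$ (r,s) =
    E (kron (tauN dA' dA dB dR V dC0 dC1 N X (r mod dC1) (s mod dC1)) (unif dB)) $$ (r div dC1, s div dC1)"
proof -
  define T1 where "T1 = tensor_id dA' (dR*dA) (\<lambda>Y. V * Y * adj V) dC0 X"
  define T2 where "T2 = id_tensor dR (dA*dC0) (dB*dC1) N T1"
  define P where "P a a' = ptrace_first dB dC1 (N (mat (dA*dC0) (dA*dC0) (\<lambda>(k,l). T1 $$ (a*(dA*dC0) + k, a'*(dA*dC0) + l))))" for a a'
  define tau where "tau c c' = mat dR dR (\<lambda>(a,a'). P a a' $$ (c,c'))" for c c'
  have tauN: "tauN dA' dA dB dR V dC0 dC1 N X = tau" unfolding tauN_def tau_def P_def T1_def by (intro ext) simp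
  let ?c = "r mod dC1" and ?c' = "s mod dC1"
  have c: "?c < dC1" and c': "?c' < dC1" using dC1 by auto
  have M: "mat (dR*dB) (dR*dB) (\<lambda>(i,j). T2 $$ (i*dC1 + ?c, j*dC1 + ?c')) = kron (tau ?c ?c') (unif dB)"
  proof (rule eq_matI)
    fix i j assume "i < dim_row (kron (tau ?c ?c') (unif dB))" "j < dim_col (kron (tau ?c ?c') (unif dB))"
    hence i: "i < dR*dB" and j: "j < dR*dB" by (simp_all add: tau_def)
    let ?B = "mat (dA*dC0) (dA*dC0) (\<lambda>(k,l). T1 $$ ((i div dB)*(dA*dC0) + k, (j div dB)*(dA*dC0) + l))"
    have NB: "N ?B = kron (unif dB) (ptrace_first dB dC1 (N ?B))" using N unfolding marg_uniform_def by simp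
    have im: "i mod dB < dB" "j mod dB < dB" using dB by auto
    have "T2 $$ (i*dC1 + ?c, j*dC1 + ?c') = N ?B $$ ((i mod dB)*dC1 + ?c, (j mod dB)*dC1 + ?c')"
      unfolding T2_def by (rule T2_index[OF i j c c'])
    also have "\<dots> = unif dB $$ (i mod dB, j mod dB) * P (i div dB) (j div dB) $$ (?c, ?c')"
      apply (subst NB)
      apply (subst kron_index[of _ dB dB _ dC1 dC1])
      using idx_lt[OF im(1) c] idx_lt[OF im(2) c'] c c' by (simp_all add: P_def)
    finally show "mat (dR*dB) (dR*dB) (\<lambda>(i,j). T2 $$ (i*dC1 + ?c, j*dC1 + ?c')) $$ (i,j) = kron (tau ?c ?c') (unif dB) $$ (i,j)"
      using i j div_lt[OF i] div_lt[OF j] im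
      by (simp add: kron_index[of _ dR dR _ dB dB] tau_def)
  qed (simp_all add: tau_def)
  have "superch_ext dA' dA dB dR V E dC0 dC1 N X $$ (r,s) = E (mat (dR*dB) (dR*dB) (\<lambda>(i,j). T2 $$ (i*dC1 + ?c, j*dC1 + ?c'))) $$ (r div dC1, s div dC1)"
    unfolding superch_ext_def T2_def T1_def using r s by (simp add: tensor_id_index)
  also have "\<dots> = E (kron (tau ?c ?c') (unif dB)) $$ (r div dC1, s div dC1)" unfolding M ..
  finally show ?thesis unfolding tauN .
qed

lemma ptrace_kron_unif: assumes dB: "0 < dB" and X: "X \<in> carrier_mat dA dA"
  shows "ptrace_first dB dA (kron (unif dB) X) = X"
proof (rule eq_matI)
  fix i j assume "i < dim_row X" "j < dim_col X"
  hence i: "i < dA" and j: "j < dA" using X by auto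
  have "ptrace_first dB dA (kron (unif dB) X) $$ (i,j) = (\<Sum>k<dB. kron (unif dB) X $$ (k*dA + i, k*dA + j))"
    using i j by (simp add: ptrace_index)
  also have "\<dots> = (\<Sum>k<dB. (1 / of_nat dB) * X $$ (i,j))"
  proof (rule sum.cong[OF refl])
    fix k assume k: "k \<in> {..<dB}"
    have a: "k*dA + i < dB*dA" "k*dA + j < dB*dA" using k i j idx_lt by auto
    show "kron (unif dB) X $$ (k*dA + i, k*dA + j) = (1 / of_nat dB) * X $$ (i,j)"
      using k i j by (simp add: kron_index[OF unif_carrier(1) X a] unif_entry)
  qed
  also have "\<dots> = X $$ (i,j)" using dB by simp
  finally show "ptrace_first dB dA (kron (unif dB) X) $$ (i,j) = X $$ (i,j)" .
qed (use X in auto)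

lemma tauN_N0:
  assumes V: "V \<in> carrier_mat (dR*dA) dA'" and X: "X \<in> carrier_mat dA' dA'" and dB: "0 < dB"
    and c: "c < dA" and c': "c' < dA"
  shows "tauN dA' dA dB dR V 1 dA (\<lambda>X. kron (unif dB) X) X c c' = mat dR dR (\<lambda>(a,a'). (V*X*adj V) $$ (a*dA + c, a'*dA + c'))"
proof -
  have T1: "tensor_id dA' (dR*dA) (\<lambda>Y. V*Y*adj V) 1 X = V*X*adj V"
  proof (rule eq_matI)
    fix r s assume "r < dim_row (V*X*adj V)" "s < dim_col (V*X*adj V)"
    hence r: "r < dR*dA*1" and s: "s < dR*dA*1" using V by (simp_all add: adj_def)
    have e: "mat dA' dA' (\<lambda>(i,j). X $$ (i*1 + r mod 1, j*1 + s mod 1)) = X" using X by (intro eq_matI) auto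
    show "tensor_id dA' (dR*dA) (\<lambda>Y. V*Y*adj V) 1 X $$ (r,s) = (V*X*adj V) $$ (r,s)"
      unfolding tensor_id_index[OF r s] e by simp
  qed (use V in \<open>simp_all add: adj_def\<close>)
  show ?thesis
  proof (rule eq_matI)
    fix a a' assume "a < dim_row (mat dR dR (\<lambda>(a,a'). (V*X*adj V) $$ (a*dA + c, a'*dA + c')))"
      "a' < dim_col (mat dR dR (\<lambda>(a,a'). (V*X*adj V) $$ (a*dA + c, a'*dA + c')))"
    hence a: "a < dR" and a': "a' < dR" by auto
    let ?B = "mat (dA*1) (dA*1) (\<lambda>(k,l). (V*X*adj V) $$ (a*(dA*1)+k, a'*(dA*1)+l))"
    have B: "?B \<in> carrier_mat dA dA" by simp
    have pk: "ptrace_first dB dA (kron (unif dB) (mat dA dA (\<lambda>(k,l). (V*X*adj V) $$ (a*dA+k, a'*dA+l))))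
       = mat dA dA (\<lambda>(k,l). (V*X*adj V) $$ (a*dA+k, a'*dA+l))"
      by (rule ptrace_kron_unif[OF dB]) simp
    show "tauN dA' dA dB dR V 1 dA (\<lambda>X. kron (unif dB) X) X c c' $$ (a,a') = mat dR dR (\<lambda>(a,a'). (V*X*adj V) $$ (a*dA + c, a'*dA + c')) $$ (a,a')"
      unfolding tauN_def T1 using a a' c c' pk by simp
  qed (simp_all add: tauN_def)
qed

lemma stepA:
  assumes E: "CPTP (dR*dB) dB E" and dB: "0 < dB" and dA: "0 < dA" and V: "V \<in> carrier_mat (dR*dA) dA'"
    and m2: "marg_uniform dA' dB dA (superch_ext dA' dA dB dR V E 1 dA (\<lambda>X. kron (unif dB) X))"
    and X: "X \<in> carrier_mat dA' dA'" and c: "c < dA" and c': "c' < dA"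
  shows "E (kron (mat dR dR (\<lambda>(a,a'). (V*X*adj V) $$ (a*dA + c, a'*dA + c'))) (unif dB))
     = mtrace (mat dR dR (\<lambda>(a,a'). (V*X*adj V) $$ (a*dA + c, a'*dA + c'))) \<cdot>\<^sub>m unif dB"
proof -
  define \<tau> where "\<tau> = mat dR dR (\<lambda>(a,a'). (V*X*adj V) $$ (a*dA + c, a'*dA + c'))"
  define F where "F = superch_ext dA' dA dB dR V E 1 dA (\<lambda>X. kron (unif dB) X) X"
  have N0: "marg_uniform (dA*1) dB dA (\<lambda>X. kron (unif dB) X)" using N0_marg[OF dB] by simp
  have tc: "\<tau> \<in> carrier_mat dR dR" unfolding \<tau>_def by simp
  have Ec: "E (kron \<tau> (unif dB)) \<in> carrier_mat dB dB"
    using E kron_carrier[OF tc unif_carrier(1)] unfolding CPTP_def by blast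
  have FI: "F $$ (\<beta>*dA + c1, \<beta>'*dA + c1') = E (kron (mat dR dR (\<lambda>(a,a'). (V*X*adj V) $$ (a*dA + c1, a'*dA + c1'))) (unif dB)) $$ (\<beta>, \<beta>')"
    if b: "\<beta> < dB" "\<beta>' < dB" and cc: "c1 < dA" "c1' < dA" for \<beta> \<beta>' c1 c1'
  proof -
    have r: "\<beta>*dA + c1 < dB*dA" "\<beta>'*dA + c1' < dB*dA" using idx_lt b cc by auto
    have m: "(\<beta>*dA+c1) mod dA = c1" "(\<beta>'*dA+c1') mod dA = c1'" "(\<beta>*dA+c1) div dA = \<beta>" "(\<beta>'*dA+c1') div dA = \<beta>'"
      using cc by simp_all
    show ?thesis unfolding F_def superch_ext_index[OF dB dA N0 r] m tauN_N0[OF V X dB cc] ..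
  qed
  have Fm: "F = kron (unif dB) (ptrace_first dB dA F)" using m2 X unfolding marg_uniform_def F_def by blast
  have pt: "ptrace_first dB dA F $$ (c,c') = mtrace \<tau>"
  proof -
    have "ptrace_first dB dA F $$ (c,c') = (\<Sum>k<dB. F $$ (k*dA + c, k*dA + c'))" using c c' by (simp add: ptrace_index)
    also have "\<dots> = (\<Sum>k<dB. E (kron \<tau> (unif dB)) $$ (k,k))" unfolding \<tau>_def using FI c c' by simp
    also have "\<dots> = mtrace (E (kron \<tau> (unif dB)))" unfolding mtrace_def using Ec by simp
    also have "\<dots> = mtrace (kron \<tau> (unif dB))" using E kron_carrier[OF tc unif_carrier(1)] unfolding CPTP_def by blast
    also have "\<dots> = mtrace \<tau>" using mtrace_kron[OF tc unif_carrier(1)] mtrace_unif[OF dB] by simp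
    finally show ?thesis .
  qed
  have "E (kron \<tau> (unif dB)) = mtrace \<tau> \<cdot>\<^sub>m unif dB"
  proof (rule eq_matI)
    fix \<beta> \<beta>' assume "\<beta> < dim_row (mtrace \<tau> \<cdot>\<^sub>m unif dB)" "\<beta>' < dim_col (mtrace \<tau> \<cdot>\<^sub>m unif dB)"
    hence b: "\<beta> < dB" "\<beta>' < dB" by auto
    have r: "\<beta>*dA + c < dB*dA" "\<beta>'*dA + c' < dB*dA" using idx_lt b c c' by auto
    have "E (kron \<tau> (unif dB)) $$ (\<beta>,\<beta>') = F $$ (\<beta>*dA + c, \<beta>'*dA + c')" unfolding \<tau>_def using FI b c c' by simp
    also have "\<dots> = kron (unif dB) (ptrace_first dB dA F) $$ (\<beta>*dA + c, \<beta>'*dA + c')" using Fm by metis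
    also have "\<dots> = unif dB $$ (\<beta>,\<beta>') * mtrace \<tau>"
      using kron_index[OF unif_carrier(1) ptrace_carrier(1) r] c c' pt by simp
    finally show "E (kron \<tau> (unif dB)) $$ (\<beta>,\<beta>') = (mtrace \<tau> \<cdot>\<^sub>m unif dB) $$ (\<beta>,\<beta>')" using b by simp
  qed (use Ec in auto)
  thus ?thesis unfolding \<tau>_def .
qed


lemma mult_entry: "A \<in> carrier_mat n m \<Longrightarrow> B \<in> carrier_mat m k \<Longrightarrow> i < n \<Longrightarrow> j < k \<Longrightarrow>
  (A * B) $$ (i,j) = (\<Sum>l<m. A $$ (i,l) * B $$ (l,j))"
  by (simp add: scalar_prod_def lessThan_atLeast0)

lemma adj_carrier: "A \<in> carrier_mat n m \<Longrightarrow> adj A \<in> carrier_mat m n"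
  by (simp add: adj_def)
lemma adj_entry: "A \<in> carrier_mat n m \<Longrightarrow> i < m \<Longrightarrow> j < n \<Longrightarrow> adj A $$ (i,j) = cnj (A $$ (j,i))"
  by (simp add: adj_def)
lemma adj_dim[simp]: "dim_row (adj A) = dim_col A" "dim_col (adj A) = dim_row A"
  by (simp_all add: adj_def)

lemma adj_adj: "adj (adj A) = A"
  by (intro eq_matI) (auto simp: adj_def)

lemma adj_mult: assumes A: "A \<in> carrier_mat n m" and B: "B \<in> carrier_mat m k"
  shows "adj (A * B) = adj B * adj A"
proof (rule eq_matI)
  fix i j assume "i < dim_row (adj B * adj A)" "j < dim_col (adj B * adj A)"
  hence i: "i < k" and j: "j < n" using A B by auto
  have AB: "A * B \<in> carrier_mat n k" using A B by simp
  have "adj (A * B) $$ (i,j) = cnj ((A*B) $$ (j,i))" by (rule adj_entry[OF AB i j])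
  also have "\<dots> = cnj (\<Sum>l<m. A $$ (j,l) * B $$ (l,i))" by (subst mult_entry[OF A B j i]) simp
  also have "\<dots> = (\<Sum>l<m. adj B $$ (i,l) * adj A $$ (l,j))"
    using A B i j by (simp add: cnj_sum adj_entry mult.commute)
  also have "\<dots> = (adj B * adj A) $$ (i,j)" by (rule mult_entry[OF adj_carrier[OF B] adj_carrier[OF A] i j, symmetric])
  finally show "adj (A * B) $$ (i,j) = (adj B * adj A) $$ (i,j)" .
qed (use A B in auto)

lemma congr_entry: assumes J: "J \<in> carrier_mat m n" and Y: "Y \<in> carrier_mat n n" and p: "p < m" and q: "q < m"
  shows "(J * Y * adj J) $$ (p,q) = (\<Sum>k<n. \<Sum>l<n. J $$ (p,k) * Y $$ (k,l) * cnj (J $$ (q,l)))"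
proof -
  have JY: "J * Y \<in> carrier_mat m n" using J Y by simp
  have "(J * Y * adj J) $$ (p,q) = (\<Sum>l<n. (J * Y) $$ (p,l) * adj J $$ (l,q))"
    by (rule mult_entry[OF JY adj_carrier[OF J] p q])
  also have "\<dots> = (\<Sum>l<n. (\<Sum>k<n. J $$ (p,k) * Y $$ (k,l)) * cnj (J $$ (q,l)))"
    by (rule sum.cong[OF refl]) (use J Y p q in \<open>simp add: mult_entry[OF J Y] adj_entry[OF J] del: index_mult_mat\<close>)
  also have "\<dots> = (\<Sum>k<n. \<Sum>l<n. J $$ (p,k) * Y $$ (k,l) * cnj (J $$ (q,l)))"
    by (simp add: sum_distrib_right, rule sum.swap)
  finally show ?thesis .
qed

lemma kron_id_mult: assumes W: "W \<in> carrier_mat n m" and Z: "Z \<in> carrier_mat (m*d) k" and P: "P < n*d" and x: "x < k"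
  shows "(kron W (1\<^sub>m d) * Z) $$ (P,x) = (\<Sum>s<m. W $$ (P div d, s) * Z $$ (s*d + P mod d, x))"
proof -
  have K: "kron W (1\<^sub>m d) \<in> carrier_mat (n*d) (m*d)" using kron_carrier[OF W one_carrier_mat] .
  have Pd: "P mod d < d" "P div d < n" using P mod_lt div_lt by auto
  have "(kron W (1\<^sub>m d) * Z) $$ (P,x) = (\<Sum>t<m*d. kron W (1\<^sub>m d) $$ (P,t) * Z $$ (t,x))"
    by (rule mult_entry[OF K Z P x])
  also have "\<dots> = (\<Sum>s<m. \<Sum>j<d. kron W (1\<^sub>m d) $$ (P, s*d+j) * Z $$ (s*d+j,x))" by (rule sum_split)
  also have "\<dots> = (\<Sum>s<m. \<Sum>j<d. if j = P mod d then W $$ (P div d, s) * Z $$ (s*d+j,x) else 0)"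
  proof (rule sum.cong[OF refl], rule sum.cong[OF refl])
    fix s j assume s: "s \<in> {..<m}" and j: "j \<in> {..<d}"
    have t: "s*d + j < m*d" using s j idx_lt by auto
    show "kron W (1\<^sub>m d) $$ (P, s*d+j) * Z $$ (s*d+j,x) = (if j = P mod d then W $$ (P div d, s) * Z $$ (s*d+j,x) else 0)"
      using kron_index[OF W one_carrier_mat P t] j Pd by auto
  qed
  also have "\<dots> = (\<Sum>s<m. W $$ (P div d, s) * Z $$ (s*d + P mod d, x))" using Pd by simp
  finally show ?thesis .
qed

lemma adj_kron_id: "adj (kron W (1\<^sub>m d)) = kron (adj W) (1\<^sub>m d)"
  by (intro eq_matI) (auto simp: adj_def kron_def less_mult_imp_div_less mod_lt)

lemma mult_adj_swap: assumes J: "J \<in> carrier_mat n m" and Y: "Y \<in> carrier_mat k m" and r: "r < k" and q: "q < n"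
  shows "(Y * adj J) $$ (r,q) = cnj ((J * adj Y) $$ (q,r))"
proof -
  have "adj (J * adj Y) = Y * adj J" using adj_mult[OF J adj_carrier[OF Y]] adj_adj by simp
  hence "(Y * adj J) $$ (r,q) = adj (J * adj Y) $$ (r,q)" by simp
  also have "\<dots> = cnj ((J * adj Y) $$ (q,r))" using J Y r q by (simp add: adj_def)
  finally show ?thesis .
qed

lemma mult_adj_kron_id: assumes W: "W \<in> carrier_mat n m" and Y: "Y \<in> carrier_mat k (m*d)" and r: "r < k" and q: "q < n*d"
  shows "(Y * adj (kron W (1\<^sub>m d))) $$ (r,q) = (\<Sum>s<m. Y $$ (r, s*d + q mod d) * cnj (W $$ (q div d, s)))"
proof -
  have K: "kron W (1\<^sub>m d) \<in> carrier_mat (n*d) (m*d)" using kron_carrier[OF W one_carrier_mat] .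
  have qd: "q mod d < d" using q mod_lt by auto
  have "(Y * adj (kron W (1\<^sub>m d))) $$ (r,q) = cnj ((kron W (1\<^sub>m d) * adj Y) $$ (q,r))"
    by (rule mult_adj_swap[OF K Y r q])
  also have "\<dots> = cnj (\<Sum>s<m. W $$ (q div d, s) * adj Y $$ (s*d + q mod d, r))"
    by (subst kron_id_mult[OF W adj_carrier[OF Y] q r]) simp
  also have "\<dots> = (\<Sum>s<m. Y $$ (r, s*d + q mod d) * cnj (W $$ (q div d, s)))"
  proof -
    have "\<And>s. s < m \<Longrightarrow> adj Y $$ (s*d + q mod d, r) = cnj (Y $$ (r, s*d + q mod d))"
      using Y r qd idx_lt by (simp add: adj_entry)
    thus ?thesis by (simp add: cnj_sum mult.commute)
  qed
  finally show ?thesis .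
qed

lemma kron_id_congr: assumes W: "W \<in> carrier_mat n m" and Y: "Y \<in> carrier_mat (m*d) (m*d)" and p: "p < n*d" and q: "q < n*d"
  shows "(kron W (1\<^sub>m d) * Y * adj (kron W (1\<^sub>m d))) $$ (p,q) =
    (\<Sum>s<m. \<Sum>s'<m. W $$ (p div d, s) * Y $$ (s*d + p mod d, s'*d + q mod d) * cnj (W $$ (q div d, s')))"
proof -
  have K: "kron W (1\<^sub>m d) \<in> carrier_mat (n*d) (m*d)" using kron_carrier[OF W one_carrier_mat] .
  have YJ: "Y * adj (kron W (1\<^sub>m d)) \<in> carrier_mat (m*d) (n*d)" using Y adj_carrier[OF K] by simp
  have pd: "p mod d < d" using p mod_lt by auto
  have "(kron W (1\<^sub>m d) * Y * adj (kron W (1\<^sub>m d))) = kron W (1\<^sub>m d) * (Y * adj (kron W (1\<^sub>m d)))"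
    using K Y adj_carrier[OF K] by (simp add: assoc_mult_mat)
  hence "(kron W (1\<^sub>m d) * Y * adj (kron W (1\<^sub>m d))) $$ (p,q) = (\<Sum>s<m. W $$ (p div d, s) * (Y * adj (kron W (1\<^sub>m d))) $$ (s*d + p mod d, q))"
    using kron_id_mult[OF W YJ p q] by simp
  also have "\<dots> = (\<Sum>s<m. W $$ (p div d, s) * (\<Sum>s'<m. Y $$ (s*d + p mod d, s'*d + q mod d) * cnj (W $$ (q div d, s'))))"
  proof (rule sum.cong[OF refl])
    fix s assume s: "s \<in> {..<m}"
    have r: "s*d + p mod d < m*d" using s pd idx_lt by auto
    show "W $$ (p div d, s) * (Y * adj (kron W (1\<^sub>m d))) $$ (s*d + p mod d, q) = W $$ (p div d, s) * (\<Sum>s'<m. Y $$ (s*d + p mod d, s'*d + q mod d) * cnj (W $$ (q div d, s')))"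
      using mult_adj_kron_id[OF W Y r q] by simp
  qed
  also have "\<dots> = (\<Sum>s<m. \<Sum>s'<m. W $$ (p div d, s) * Y $$ (s*d + p mod d, s'*d + q mod d) * cnj (W $$ (q div d, s')))"
    by (simp add: sum_distrib_left mult.assoc)
  finally show ?thesis .
qed

lemma kron_id_iso: assumes W: "W \<in> carrier_mat n m" and iso: "adj W * W = 1\<^sub>m m"
  shows "adj (kron W (1\<^sub>m d)) * kron W (1\<^sub>m d) = 1\<^sub>m (m*d)"
proof (rule eq_matI)
  fix p q assume "p < dim_row (1\<^sub>m (m*d) :: complex mat)" "q < dim_col (1\<^sub>m (m*d) :: complex mat)"
  hence p: "p < m*d" and q: "q < m*d" by auto
  have K: "kron W (1\<^sub>m d) \<in> carrier_mat (n*d) (m*d)" using kron_carrier[OF W one_carrier_mat] .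
  have pd: "p mod d < d" "q mod d < d" "p div d < m" "q div d < m" using p q mod_lt div_lt by auto
  have "(adj (kron W (1\<^sub>m d)) * kron W (1\<^sub>m d)) $$ (p,q) = (\<Sum>s<n. adj W $$ (p div d, s) * kron W (1\<^sub>m d) $$ (s*d + p mod d, q))"
    unfolding adj_kron_id by (rule kron_id_mult[OF adj_carrier[OF W] K p q])
  also have "\<dots> = (\<Sum>s<n. adj W $$ (p div d, s) * W $$ (s, q div d)) * (if p mod d = q mod d then 1 else 0)"
    unfolding sum_distrib_right
  proof (rule sum.cong[OF refl])
    fix s assume s: "s \<in> {..<n}"
    have r: "s*d + p mod d < n*d" using s pd idx_lt by auto
    show "adj W $$ (p div d, s) * kron W (1\<^sub>m d) $$ (s*d + p mod d, q) = adj W $$ (p div d, s) * W $$ (s, q div d) * (if p mod d = q mod d then 1 else 0)"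
      using kron_index[OF W one_carrier_mat r q] pd by simp
  qed
  also have "\<dots> = (adj W * W) $$ (p div d, q div d) * (if p mod d = q mod d then 1 else 0)"
    using mult_entry[OF adj_carrier[OF W] W pd(3) pd(4)] by simp
  also have "\<dots> = 1\<^sub>m (m*d) $$ (p,q)"
  proof -
    have eq: "(p div d = q div d \<and> p mod d = q mod d) = (p = q)" by (metis div_mult_mod_eq)
    show ?thesis unfolding iso using pd p q eq by auto
  qed
  finally show "(adj (kron W (1\<^sub>m d)) * kron W (1\<^sub>m d)) $$ (p,q) = 1\<^sub>m (m*d) $$ (p,q)" .
qed (use W in \<open>auto simp: adj_kron_id\<close>)

definition unitm :: "nat \<Rightarrow> nat \<Rightarrow> nat \<Rightarrow> complex mat" where
  "unitm n x y = mat n n (\<lambda>(i,j). if i = x \<and> j = y then 1 else 0)"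

lemma unitm_congr: assumes V: "V \<in> carrier_mat m n" and x: "x < n" and y: "y < n" and P: "P < m" and Q: "Q < m"
  shows "(V * unitm n x y * adj V) $$ (P,Q) = V $$ (P,x) * cnj (V $$ (Q,y))"
proof -
  have "(V * unitm n x y * adj V) $$ (P,Q) = (\<Sum>k<n. \<Sum>l<n. V $$ (P,k) * unitm n x y $$ (k,l) * cnj (V $$ (Q,l)))"
    by (rule congr_entry[OF V _ P Q]) (simp add: unitm_def)
  also have "\<dots> = (\<Sum>k<n. \<Sum>l<n. (V $$ (P,k) * cnj (V $$ (Q,l))) * (if x = k \<and> y = l then 1 else 0))"
    by (intro sum.cong refl) (auto simp: unitm_def)
  also have "\<dots> = V $$ (P,x) * cnj (V $$ (Q,y))" by (rule delta2[OF x y])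
  finally show ?thesis .
qed


definition Kmat :: "nat \<Rightarrow> nat \<Rightarrow> nat \<Rightarrow> complex mat \<Rightarrow> complex mat" where
  "Kmat dR dA dA' V = mat dR (dA*dA') (\<lambda>(a,t). V $$ (a*dA + t div dA', t mod dA'))"

lemma Kmat_carrier: "Kmat dR dA dA' V \<in> carrier_mat dR (dA*dA')" by (simp add: Kmat_def)

lemma inv_case:
  assumes E: "CPTP (dR*dB) dB E" and dB: "0 < dB" and dA: "0 < dA" and V: "V \<in> carrier_mat (dR*dA) dA'"
    and m2: "marg_uniform dA' dB dA (superch_ext dA' dA dB dR V E 1 dA (\<lambda>X. kron (unif dB) X))"
    and B: "B \<in> carrier_mat dR dR" and inv1: "Kmat dR dA dA' V * adj (Kmat dR dA dA' V) * B = 1\<^sub>m dR"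
    and inv2: "B * (Kmat dR dA dA' V * adj (Kmat dR dA dA' V)) = 1\<^sub>m dR"
    and tau: "\<tau> \<in> carrier_mat dR dR"
  shows "E (kron \<tau> (unif dB)) = mtrace \<tau> \<cdot>\<^sub>m unif dB"
proof -
  define K where "K = Kmat dR dA dA' V"
  define D where "D = dA*dA'"
  have K: "K \<in> carrier_mat dR D" unfolding K_def D_def by (rule Kmat_carrier)
  have aK: "adj K \<in> carrier_mat D dR" using adj_carrier[OF K] .
  define \<beta> where "\<beta> = adj K * B * \<tau> * B * K"
  have \<beta>: "\<beta> \<in> carrier_mat D D" unfolding \<beta>_def using K aK B tau by (meson mult_carrier_mat)
  have decomp: "\<tau> = K * \<beta> * adj K"
  proof -
    have "\<tau> = (K * adj K * B) * \<tau> * (B * (K * adj K))"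
      using inv1 inv2 tau unfolding K_def by simp
    also have "\<dots> = K * \<beta> * adj K"
    proof -
      have aKB: "adj K * B \<in> carrier_mat D dR" using aK B by simp
      have aKBt: "adj K * B * \<tau> \<in> carrier_mat D dR" using aKB tau by simp
      have aKBtB: "adj K * B * \<tau> * B \<in> carrier_mat D dR" using aKBt B by simp
      have KaK: "K * adj K \<in> carrier_mat dR dR" using K aK by simp
      have "K * adj K * B = K * (adj K * B)" by (rule assoc_mult_mat[OF K aK B])
      hence "(K * adj K * B) * \<tau> * (B * (K * adj K)) = K * (adj K * B) * \<tau> * (B * (K * adj K))" by simp
      also have "\<dots> = K * (adj K * B * \<tau>) * (B * (K * adj K))" using assoc_mult_mat[OF K aKB tau] by simp
      also have "\<dots> = K * (adj K * B * \<tau> * (B * (K * adj K)))"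
        using assoc_mult_mat[OF K aKBt mult_carrier_mat[OF B KaK]] by simp
      also have "adj K * B * \<tau> * (B * (K * adj K)) = adj K * B * \<tau> * B * (K * adj K)"
        using assoc_mult_mat[OF aKBt B KaK] by simp
      also have "\<dots> = adj K * B * \<tau> * B * K * adj K"
        using assoc_mult_mat[OF aKBtB K aK] by simp
      also have "K * (adj K * B * \<tau> * B * K * adj K) = K * \<beta> * adj K"
        unfolding \<beta>_def using assoc_mult_mat[OF K mult_carrier_mat[OF aKBtB K] aK] by simp
      finally show ?thesis .
    qed
    finally show ?thesis .
  qed
  define I where "I = {..<D} \<times> {..<D}"
  define Ms where "Ms x = mat dR dR (\<lambda>(i,j). K $$ (i, fst x) * cnj (K $$ (j, snd x)))" for x
  have rep: "\<tau> = mat dR dR (\<lambda>(i,j). \<Sum>x\<in>I. \<beta> $$ (fst x, snd x) * Ms x $$ (i,j))"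
  proof (rule eq_matI)
    fix i j assume "i < dim_row (mat dR dR (\<lambda>(i,j). \<Sum>x\<in>I. \<beta> $$ (fst x, snd x) * Ms x $$ (i,j)))"
      "j < dim_col (mat dR dR (\<lambda>(i,j). \<Sum>x\<in>I. \<beta> $$ (fst x, snd x) * Ms x $$ (i,j)))"
    hence i: "i < dR" and j: "j < dR" by auto
    have "\<tau> $$ (i,j) = (\<Sum>k<D. \<Sum>l<D. K $$ (i,k) * \<beta> $$ (k,l) * cnj (K $$ (j,l)))"
      by (subst decomp, rule congr_entry[OF K \<beta> i j])
    also have "\<dots> = (\<Sum>x\<in>I. \<beta> $$ (fst x, snd x) * Ms x $$ (i,j))"
      unfolding I_def Ms_def using i j by (simp add: sum.cartesian_product case_prod_beta mult.commute mult.left_commute)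
    finally show "\<tau> $$ (i,j) = mat dR dR (\<lambda>(i,j). \<Sum>x\<in>I. \<beta> $$ (fst x, snd x) * Ms x $$ (i,j)) $$ (i,j)"
      using i j by simp
  qed (use tau in auto)
  have fin: "finite I" unfolding I_def by simp
  have car: "\<forall>x\<in>I. Ms x \<in> carrier_mat dR dR" unfolding Ms_def by simp
  have lE: "linmap (dR*dB) dB E" by (rule CPTP_linmap[OF E])
  have agree: "E (kron (Ms x) (unif dB)) = mtrace (Ms x) \<cdot>\<^sub>m unif dB" if x: "x \<in> I" for x
  proof -
    obtain t t' where x: "x = (t,t')" and t: "t < dA*dA'" and t': "t' < dA*dA'" using x unfolding I_def D_def by auto
    have dA': "0 < dA'" using t by (cases dA') auto
    have tt: "t div dA' < dA" "t' div dA' < dA" "t mod dA' < dA'" "t' mod dA' < dA'"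
      using t t' div_lt[of t dA dA'] div_lt[of t' dA dA'] mod_lt dA' by (auto simp: mult.commute)
    have X: "unitm dA' (t mod dA') (t' mod dA') \<in> carrier_mat dA' dA'" by (simp add: unitm_def)
    have eq: "mat dR dR (\<lambda>(a,a'). (V * unitm dA' (t mod dA') (t' mod dA') * adj V) $$ (a*dA + t div dA', a'*dA + t' div dA')) = Ms x"
    proof (rule eq_matI)
      fix a a' assume "a < dim_row (Ms x)" "a' < dim_col (Ms x)"
      hence a: "a < dR" and a': "a' < dR" by (auto simp: Ms_def)
      have P: "a*dA + t div dA' < dR*dA" "a'*dA + t' div dA' < dR*dA" using idx_lt a a' tt by auto
      show "mat dR dR (\<lambda>(a,a'). (V * unitm dA' (t mod dA') (t' mod dA') * adj V) $$ (a*dA + t div dA', a'*dA + t' div dA')) $$ (a,a') = Ms x $$ (a,a')"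
        using a a' unitm_congr[OF V tt(3) tt(4) P] t t' unfolding Ms_def x K_def Kmat_def D_def by simp
    qed (simp_all add: Ms_def)
    show ?thesis using stepA[OF E dB dA V m2 X tt(1) tt(2)] unfolding eq .
  qed
  have "E (kron \<tau> (unif dB)) = mat dB dB (\<lambda>(p,q). \<Sum>x\<in>I. \<beta> $$ (fst x, snd x) * E (kron (Ms x) (unif dB)) $$ (p,q))"
    by (subst rep, rule lin_sum[OF linmap_kron[OF lE] fin car])
  also have "\<dots> = mat dB dB (\<lambda>(p,q). \<Sum>x\<in>I. \<beta> $$ (fst x, snd x) * (mtrace (Ms x) \<cdot>\<^sub>m unif dB) $$ (p,q))"
    using agree by simp
  also have "\<dots> = mtrace \<tau> \<cdot>\<^sub>m unif dB"
    by (subst rep, rule lin_sum[OF linmap_tr fin car, symmetric])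
  finally show ?thesis .
qed

lemma sing_case:
  assumes V: "V \<in> carrier_mat (dR*dA) dA'" and z: "z \<in> carrier_vec dR"
    and rz: "(Kmat dR dA dA' V * adj (Kmat dR dA dA' V)) *\<^sub>v z = 0\<^sub>v dR"
    and c: "c < dA" and x: "x < dA'"
  shows "(\<Sum>a<dR. cnj (V $$ (a*dA + c, x)) * z $ a) = 0"
proof -
  define K where "K = Kmat dR dA dA' V"
  define D where "D = dA*dA'"
  have K: "K \<in> carrier_mat dR D" unfolding K_def D_def by (rule Kmat_carrier)
  have aK: "adj K \<in> carrier_mat D dR" using adj_carrier[OF K] .
  define w where "w = adj K *\<^sub>v z"
  have w: "w \<in> carrier_vec D" unfolding w_def using aK z by simp
  have wt: "w $ t = (\<Sum>a<dR. cnj (K $$ (a,t)) * z $ a)" if t: "t < D" for t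
    unfolding w_def using aK z t K by (simp add: scalar_prod_def lessThan_atLeast0 adj_def)
  have Kw: "K *\<^sub>v w = 0\<^sub>v dR" using rz unfolding w_def K_def[symmetric]
    using assoc_mult_mat_vec[OF K aK z] by simp
  have "(\<Sum>a<dR. cnj (z $ a) * (K *\<^sub>v w) $ a) = 0" using Kw by simp
  moreover have "(\<Sum>a<dR. cnj (z $ a) * (K *\<^sub>v w) $ a) = (\<Sum>t<D. cnj (w $ t) * w $ t)"
  proof -
    have "(\<Sum>a<dR. cnj (z $ a) * (K *\<^sub>v w) $ a) = (\<Sum>a<dR. \<Sum>t<D. cnj (z $ a) * K $$ (a,t) * w $ t)"
      using K w by (simp add: scalar_prod_def lessThan_atLeast0 sum_distrib_left mult.assoc)
    also have "\<dots> = (\<Sum>t<D. \<Sum>a<dR. cnj (z $ a) * K $$ (a,t) * w $ t)" by (rule sum.swap)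
    also have "\<dots> = (\<Sum>t<D. cnj (w $ t) * w $ t)"
    proof (rule sum.cong[OF refl])
      fix t assume t: "t \<in> {..<D}"
      have cw: "cnj (w $ t) = (\<Sum>a<dR. cnj (z $ a) * K $$ (a,t))" using wt t by (simp add: cnj_sum mult.commute)
      show "(\<Sum>a<dR. cnj (z $ a) * K $$ (a,t) * w $ t) = cnj (w $ t) * w $ t"
        by (simp only: sum_distrib_right[symmetric] cw)
    qed
    finally show ?thesis .
  qed
  ultimately have s0: "(\<Sum>t<D. cnj (w $ t) * w $ t) = 0" by simp
  have allz: "\<forall>t<D. w $ t = 0"
  proof (rule ccontr)
    assume "\<not> (\<forall>t<D. w $ t = 0)"
    then obtain t0 where t0: "t0 < D" "w $ t0 \<noteq> 0" by auto
    have "Re (\<Sum>t<D. cnj (w $ t) * w $ t) = (\<Sum>t<D. (cmod (w $ t))^2)"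
      by (simp add: complex_mult_cnj cmod_power2 mult.commute)
    also have "\<dots> > 0"
    proof (rule sum_pos2[of _ t0])
      show "(cmod (w $ t0))^2 > 0" using t0 by simp
    qed (use t0 in auto)
    finally show False using s0 by simp
  qed
  have t: "c*dA' + x < D" unfolding D_def using idx_lt[OF c x] .
  have "w $ (c*dA' + x) = (\<Sum>a<dR. cnj (V $$ (a*dA + c, x)) * z $ a)"
    unfolding wt[OF t] K_def Kmat_def using t x unfolding D_def by simp
  thus ?thesis using allz t by simp
qed

lemma dichotomy:
  assumes A: "(A :: complex mat) \<in> carrier_mat n n"
  shows "(\<exists>B. B \<in> carrier_mat n n \<and> A * B = 1\<^sub>m n \<and> B * A = 1\<^sub>m n) \<or> (\<exists>v. v \<in> carrier_vec n \<and> v \<noteq> 0\<^sub>v n \<and> A *\<^sub>v v = 0\<^sub>v n)"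
proof (cases "det A = 0")
  case True thus ?thesis using det_0_iff_vec_prod_zero[OF A] by blast
next
  case False
  from det_non_zero_imp_unit[OF A False, of "()"]
  have "A \<in> Units (ring_mat TYPE(complex) n ())" .
  then obtain B where "B \<in> carrier_mat n n" "A * B = 1\<^sub>m n" "B * A = 1\<^sub>m n"
    unfolding Units_def ring_mat_def by auto
  thus ?thesis by blast
qed


lemma normalize_vec:
  assumes z: "z \<in> carrier_vec n" and nz: "z \<noteq> 0\<^sub>v n" and L: "L < n"
  shows "\<exists>\<theta> t. (\<Sum>a<n. (\<theta> * z $ a) * cnj (\<theta> * z $ a)) = 1 \<and> \<theta> * z $ L = of_real t \<and> t \<ge> 0"
proof -
  define nr where "nr = (\<Sum>a<n. (cmod (z $ a))^2)"
  obtain a0 where a0: "a0 < n" "z $ a0 \<noteq> 0" using z nz by (metis eq_vecI carrier_vecD index_zero_vec(1,2))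
  have nr: "nr > 0" unfolding nr_def
    by (rule sum_pos2[of _ a0]) (use a0 in auto)
  have sq: "(complex_of_real (sqrt nr))^2 = of_real nr" using nr by (metis of_real_power real_sqrt_pow2 less_imp_le)
  define ph where "ph = (if z $ L = 0 then 1 else cnj (z $ L) / of_real (cmod (z $ L)))"
  have ph1: "ph * cnj ph = 1"
  proof (cases "z $ L = 0")
    case False
    have "cnj (z $ L) * z $ L = of_real ((cmod (z $ L))^2)" by (metis complex_norm_square mult.commute)
    thus ?thesis using False unfolding ph_def by (simp add: power2_eq_square field_simps)
  qed (simp add: ph_def)
  define \<theta> where "\<theta> = ph / of_real (sqrt nr)"
  have "(\<Sum>a<n. (\<theta> * z $ a) * cnj (\<theta> * z $ a)) = (\<theta> * cnj \<theta>) * (\<Sum>a<n. z $ a * cnj (z $ a))"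
    by (simp add: sum_distrib_left mult.commute mult.left_commute)
  also have "(\<Sum>a<n. z $ a * cnj (z $ a)) = of_real nr"
    unfolding nr_def by (simp only: of_real_sum complex_norm_square)
  also have "\<theta> * cnj \<theta> = ph * cnj ph / of_real nr"
    unfolding \<theta>_def using nr sq by (simp add: power2_eq_square[symmetric] field_simps del: of_real_power) 
  finally have n1: "(\<Sum>a<n. (\<theta> * z $ a) * cnj (\<theta> * z $ a)) = 1" using ph1 nr by simp
  have "\<theta> * z $ L = of_real (cmod (z $ L) / sqrt nr)"
  proof (cases "z $ L = 0")
    case True thus ?thesis by simp
  next
    case False
    have "cnj (z $ L) * z $ L = of_real ((cmod (z $ L))^2)" by (metis complex_norm_square mult.commute)
    thus ?thesis using False nr unfolding \<theta>_def ph_def by (simp add: power2_eq_square field_simps)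
  qed
  thus ?thesis using n1 nr by (intro exI[of _ \<theta>] exI[of _ "cmod (z $ L) / sqrt nr"]) simp
qed

lemma householder:
  fixes zh :: "nat \<Rightarrow> complex"
  assumes L: "L < n" and nrm: "(\<Sum>a<n. zh a * cnj (zh a)) = 1" and zL: "zh L = of_real t" and t: "t \<ge> 0"
  shows "\<exists>H. (\<forall>i j. cnj (H i j) = H j i) \<and> (\<forall>i<n. \<forall>j<n. (\<Sum>k<n. H i k * H k j) = (if i = j then 1 else 0))
     \<and> (\<forall>i<n. H i L = - zh i)"
proof -
  define u where "u a = zh a + (if a = L then 1 else 0)" for a
  define c :: complex where "c = 1 / of_real (1 + t)"
  define H where "H i j = (if i = j then 1 else 0) - c * u i * cnj (u j)" for i j
  have cr: "cnj c = c" unfolding c_def by simp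
  have ne: "1 + t \<noteq> 0" using t by linarith
  have ne': "complex_of_real (1 + t) \<noteq> 0" using ne by (simp only: of_real_eq_0_iff) simp
  have c0: "of_real (1 + t) * c = 1" unfolding c_def using ne' by (simp del: of_real_add)
  have nu: "(\<Sum>k<n. cnj (u k) * u k) = 2 + 2 * of_real t"
  proof -
    have "(\<Sum>k<n. cnj (u k) * u k) = (\<Sum>k<n. zh k * cnj (zh k)) + (\<Sum>k<n. if k = L then cnj (zh k) + zh k + 1 else 0)"
    proof -
      have pw: "\<And>k. cnj (u k) * u k = zh k * cnj (zh k) + (if k = L then cnj (zh k) + zh k + 1 else 0)"
        unfolding u_def by (auto simp: algebra_simps)
      show ?thesis by (simp only: pw sum.distrib)
    qed
    also have "\<dots> = 2 + 2 * of_real t" using nrm L zL by simp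
    finally show ?thesis .
  qed
  have herm: "\<forall>i j. cnj (H i j) = H j i" unfolding H_def using cr by (simp add: mult.commute mult.left_commute)
  have unit: "(\<Sum>k<n. H i k * H k j) = (if i = j then 1 else 0)" if i: "i < n" and j: "j < n" for i j
  proof -
    have e: "H i k * H k j = (if i = k \<and> k = j then 1 else 0) - (if k = i then c * u k * cnj (u j) else 0)
       - (if k = j then c * u i * cnj (u k) else 0) + c * c * u i * cnj (u j) * (cnj (u k) * u k)" for k
      unfolding H_def by (auto simp: algebra_simps)
    have "(\<Sum>k<n. H i k * H k j) = (\<Sum>k<n. (if i = k \<and> k = j then 1 else 0)) - c * u i * cnj (u j)
      - c * u i * cnj (u j) + c * c * u i * cnj (u j) * (\<Sum>k<n. cnj (u k) * u k)"
      unfolding e using i j by (simp add: sum.distrib sum_subtractf sum_distrib_left)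
    also have "(\<Sum>k<n. (if i = k \<and> k = j then 1 else (0::complex))) = (if i = j then 1 else 0)"
    proof -
      have "(\<Sum>k<n. (if i = k \<and> k = j then 1 else (0::complex))) = (\<Sum>k<n. if k = i then (if i = j then 1 else 0) else 0)"
        by (rule sum.cong) auto
      also have "\<dots> = (if i = j then 1 else 0)" using i by simp
      finally show ?thesis .
    qed
    also have "c * c * u i * cnj (u j) * (\<Sum>k<n. cnj (u k) * u k) = 2 * c * u i * cnj (u j)"
    proof -
      have c0': "c * (1 + of_real t) = 1" using c0 by (simp add: mult.commute)
      have "c * c * (2 + 2 * of_real t) = 2 * c * (c * (1 + of_real t))" by (simp add: algebra_simps)
      hence cc: "c * c * (2 + 2 * of_real t) = 2 * c" using c0' by simp
      have "c * c * u i * cnj (u j) * (2 + 2 * of_real t) = (c * c * (2 + 2 * of_real t)) * (u i * cnj (u j))"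
        by (simp add: algebra_simps)
      thus ?thesis unfolding nu cc by (simp add: algebra_simps)
    qed
    finally show ?thesis by simp
  qed
  have lastc: "H i L = - zh i" if i: "i < n" for i
  proof -
    have "cnj (u L) = of_real (1 + t)" unfolding u_def zL by simp
    hence "H i L = (if i = L then 1 else 0) - u i" unfolding H_def using c0 by (simp add: mult.assoc mult.commute)
    thus ?thesis unfolding u_def by simp
  qed
  show ?thesis using herm unit lastc by blast
qed

lemma W_exists:
  assumes dR: "0 < dR" and z: "z \<in> carrier_vec dR" and nz: "z \<noteq> 0\<^sub>v dR"
  shows "\<exists>W. W \<in> carrier_mat dR (dR-1) \<and> adj W * W = 1\<^sub>m (dR-1) \<and>
    (\<forall>y. (\<Sum>a<dR. cnj (z $ a) * y a) = 0 \<longrightarrow> (\<forall>a<dR. (\<Sum>a'<dR. (W * adj W) $$ (a,a') * y a') = y a))"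
proof -
  define L where "L = dR - 1"
  have L: "L < dR" and dRL: "dR = Suc L" unfolding L_def using dR by auto
  obtain \<theta> t where n1: "(\<Sum>a<dR. (\<theta> * z $ a) * cnj (\<theta> * z $ a)) = 1" and zL: "\<theta> * z $ L = of_real t" and t: "t \<ge> 0"
    using normalize_vec[OF z nz L] by blast
  define zh where "zh a = \<theta> * z $ a" for a
  obtain H where herm: "\<forall>i j. cnj (H i j) = H j i" and unit: "\<forall>i<dR. \<forall>j<dR. (\<Sum>k<dR. H i k * H k j) = (if i = j then 1 else 0)"
    and lastc: "\<forall>i<dR. H i L = - zh i"
    using householder[of L dR zh t] L n1 zL t unfolding zh_def by blast
  define W where "W = mat dR L (\<lambda>(i,s). H i s)"
  have W: "W \<in> carrier_mat dR L" unfolding W_def by simp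
  have iso: "adj W * W = 1\<^sub>m L"
  proof (rule eq_matI)
    fix s s' assume "s < dim_row (1\<^sub>m L :: complex mat)" "s' < dim_col (1\<^sub>m L :: complex mat)"
    hence s: "s < L" and s': "s' < L" by auto
    have "(adj W * W) $$ (s,s') = (\<Sum>i<dR. adj W $$ (s,i) * W $$ (i,s'))" by (rule mult_entry[OF adj_carrier[OF W] W s s'])
    also have "\<dots> = (\<Sum>i<dR. H s i * H i s')"
    proof (rule sum.cong[OF refl])
      fix i assume i: "i \<in> {..<dR}"
      have "adj W $$ (s,i) = cnj (W $$ (i,s))" using adj_entry[OF W] s i by simp
      thus "adj W $$ (s,i) * W $$ (i,s') = H s i * H i s'" using herm i s s' L unfolding W_def by simp
    qed
    also have "\<dots> = 1\<^sub>m L $$ (s,s')" using unit s s' L by simp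
    finally show "(adj W * W) $$ (s,s') = 1\<^sub>m L $$ (s,s')" .
  qed (use W in auto)
  have WW: "(W * adj W) $$ (a,a') = (if a = a' then 1 else 0) - zh a * cnj (zh a')" if a: "a < dR" and a': "a' < dR" for a a'
  proof -
    have "(W * adj W) $$ (a,a') = (\<Sum>s<L. W $$ (a,s) * adj W $$ (s,a'))" by (rule mult_entry[OF W adj_carrier[OF W] a a'])
    also have "\<dots> = (\<Sum>s<L. H a s * H s a')"
    proof (rule sum.cong[OF refl])
      fix s assume s: "s \<in> {..<L}"
      have "adj W $$ (s,a') = cnj (W $$ (a',s))" using adj_entry[OF W] s a' by simp
      thus "W $$ (a,s) * adj W $$ (s,a') = H a s * H s a'" using herm a a' s unfolding W_def by simp
    qed
    also have "\<dots> = (\<Sum>s<dR. H a s * H s a') - H a L * H L a'" unfolding dRL by simp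
    also have "\<dots> = (if a = a' then 1 else 0) - zh a * cnj (zh a')"
    proof -
      have "H L a' = cnj (H a' L)" using herm by simp
      also have "\<dots> = - cnj (zh a')" using lastc a' by simp
      finally show ?thesis using unit a a' lastc by simp
    qed
    finally show ?thesis .
  qed
  have proj: "(\<Sum>a'<dR. (W * adj W) $$ (a,a') * y a') = y a" if y: "(\<Sum>a<dR. cnj (z $ a) * y a) = 0" and a: "a < dR" for y a
  proof -
    have "(\<Sum>a'<dR. (W * adj W) $$ (a,a') * y a') = (\<Sum>a'<dR. (if a = a' then y a' else 0) - zh a * cnj \<theta> * (cnj (z $ a') * y a'))"
      by (rule sum.cong[OF refl]) (auto simp: WW a zh_def algebra_simps)
    also have "\<dots> = y a - zh a * cnj \<theta> * (\<Sum>a'<dR. cnj (z $ a') * y a')"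
      using a by (simp add: sum_subtractf sum_distrib_left)
    also have "\<dots> = y a" using y by simp
    finally show ?thesis .
  qed
  show ?thesis using W iso proj unfolding L_def by blast
qed


lemma trace_congr_iso: assumes J: "J \<in> carrier_mat m n" and iso: "adj J * J = 1\<^sub>m n" and Y: "Y \<in> carrier_mat n n"
  shows "mtrace (J * Y * adj J) = mtrace Y"
proof -
  have "mtrace (J * Y * adj J) = (\<Sum>p<m. \<Sum>k<n. \<Sum>l<n. J $$ (p,k) * Y $$ (k,l) * cnj (J $$ (p,l)))"
  proof -
    have dr: "dim_row (J*Y*adj J) = m" using J by simp
    show ?thesis unfolding mtrace_def dr by (rule sum.cong[OF refl], rule congr_entry[OF J Y]) auto
  qed
  also have "\<dots> = (\<Sum>k<n. \<Sum>l<n. \<Sum>p<m. J $$ (p,k) * Y $$ (k,l) * cnj (J $$ (p,l)))"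
    by (subst sum.swap, rule sum.cong[OF refl], rule sum.swap)
  also have "\<dots> = (\<Sum>k<n. \<Sum>l<n. Y $$ (k,l) * (adj J * J) $$ (l,k))"
  proof (intro sum.cong refl)
    fix k l assume k: "k \<in> {..<n}" and l: "l \<in> {..<n}"
    have "(adj J * J) $$ (l,k) = (\<Sum>p<m. adj J $$ (l,p) * J $$ (p,k))"
      using k l by (intro mult_entry[OF adj_carrier[OF J] J]) auto
    also have "\<dots> = (\<Sum>p<m. cnj (J $$ (p,l)) * J $$ (p,k))" using J l by (intro sum.cong refl) (auto simp: adj_entry)
    finally show "(\<Sum>p<m. J $$ (p,k) * Y $$ (k,l) * cnj (J $$ (p,l))) = Y $$ (k,l) * (adj J * J) $$ (l,k)"
      by (simp add: sum_distrib_left mult.commute mult.left_commute)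
  qed
  also have "\<dots> = (\<Sum>k<n. \<Sum>l<n. Y $$ (k,l) * (if l = k then 1 else 0))" unfolding iso by (intro sum.cong refl) auto
  also have "\<dots> = mtrace Y" unfolding mtrace_def using Y by (simp add: if_distrib cong: if_cong)
  finally show ?thesis .
qed

lemma CPTP_congr:
  assumes J: "J \<in> carrier_mat m n" and iso: "adj J * J = 1\<^sub>m n" and E: "CPTP m d E"
  shows "CPTP n d (\<lambda>Y. E (J * Y * adj J))"
proof -
  have JYc: "J * Y * adj J \<in> carrier_mat m m" if "Y \<in> carrier_mat n n" for Y using J that adj_carrier[OF J] by simp
  have kr: "\<forall>Y\<in>carrier_mat n n. J * Y * adj J = mat m m (\<lambda>(p,q). \<Sum>b<(1::nat). \<Sum>k<n. \<Sum>l<n. (\<lambda>b p k. J $$ (p,k)) b p k * Y $$ (k,l) * cnj ((\<lambda>b p k. J $$ (p,k)) b q l))"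
  proof
    fix Y :: "complex mat" assume Y: "Y \<in> carrier_mat n n"
    show "J * Y * adj J = mat m m (\<lambda>(p,q). \<Sum>b<(1::nat). \<Sum>k<n. \<Sum>l<n. (\<lambda>b p k. J $$ (p,k)) b p k * Y $$ (k,l) * cnj ((\<lambda>b p k. J $$ (p,k)) b q l))"
    proof -
      have one: "{..<1::nat} = {0}" by auto
      show ?thesis
      proof (rule eq_matI)
        fix i j assume "i < dim_row (mat m m (\<lambda>(p,q). \<Sum>b<(1::nat). \<Sum>k<n. \<Sum>l<n. (\<lambda>b p k. J $$ (p,k)) b p k * Y $$ (k,l) * cnj ((\<lambda>b p k. J $$ (p,k)) b q l)))"
          "j < dim_col (mat m m (\<lambda>(p,q). \<Sum>b<(1::nat). \<Sum>k<n. \<Sum>l<n. (\<lambda>b p k. J $$ (p,k)) b p k * Y $$ (k,l) * cnj ((\<lambda>b p k. J $$ (p,k)) b q l)))"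
        hence i: "i < m" and j: "j < m" by auto
        have "(\<Sum>b<(1::nat). \<Sum>k<n. \<Sum>l<n. J $$ (i,k) * Y $$ (k,l) * cnj (J $$ (j,l))) = (\<Sum>k<n. \<Sum>l<n. J $$ (i,k) * Y $$ (k,l) * cnj (J $$ (j,l)))"
          by (subst one) simp
        moreover have "mat m m (\<lambda>(p,q). \<Sum>b<(1::nat). \<Sum>k<n. \<Sum>l<n. (\<lambda>b p k. J $$ (p,k)) b p k * Y $$ (k,l) * cnj ((\<lambda>b p k. J $$ (p,k)) b q l)) $$ (i,j)
            = (\<Sum>b<(1::nat). \<Sum>k<n. \<Sum>l<n. J $$ (i,k) * Y $$ (k,l) * cnj (J $$ (j,l)))"
          by (simp only: index_mat(1)[OF i j] prod.case)
        ultimately show "(J * Y * adj J) $$ (i,j) = mat m m (\<lambda>(p,q). \<Sum>b<(1::nat). \<Sum>k<n. \<Sum>l<n. (\<lambda>b p k. J $$ (p,k)) b p k * Y $$ (k,l) * cnj ((\<lambda>b p k. J $$ (p,k)) b q l)) $$ (i,j)"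
          using congr_entry[OF J Y i j] by simp
      qed (use JYc[OF Y] in auto)
    qed
  qed
  have Ec: "\<forall>X\<in>carrier_mat m m. E X \<in> carrier_mat d d" and Ea: "\<forall>X\<in>carrier_mat m m. \<forall>Y\<in>carrier_mat m m. E (X + Y) = E X + E Y"
    and Es: "\<forall>X\<in>carrier_mat m m. \<forall>c. E (c \<cdot>\<^sub>m X) = c \<cdot>\<^sub>m E X" and Et: "\<forall>X\<in>carrier_mat m m. mtrace (E X) = mtrace X"
    and Ecp: "\<forall>k>0. \<forall>X. psd (k*m) X \<longrightarrow> psd (k*d) (id_tensor k m d E X)"
    using E unfolding CPTP_def by blast+
  show ?thesis unfolding CPTP_def
  proof (intro conjI ballI allI impI)
    fix X :: "complex mat" assume X: "X \<in> carrier_mat n n"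
    show "E (J * X * adj J) \<in> carrier_mat d d" using Ec JYc[OF X] by blast
    show "mtrace (E (J * X * adj J)) = mtrace X" using Et JYc[OF X] trace_congr_iso[OF J iso X] by simp
    fix c :: complex
    have "J * (c \<cdot>\<^sub>m X) = c \<cdot>\<^sub>m (J * X)" by (rule mult_smult_distrib[OF J X])
    moreover have "(c \<cdot>\<^sub>m (J * X)) * adj J = c \<cdot>\<^sub>m (J * X * adj J)"
      by (rule mult_smult_assoc_mat[OF mult_carrier_mat[OF J X] adj_carrier[OF J]])
    ultimately have "J * (c \<cdot>\<^sub>m X) * adj J = c \<cdot>\<^sub>m (J * X * adj J)" by simp
    thus "E (J * (c \<cdot>\<^sub>m X) * adj J) = c \<cdot>\<^sub>m E (J * X * adj J)" using Es JYc[OF X] by simp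
  next
    fix X Y :: "complex mat" assume X: "X \<in> carrier_mat n n" and Y: "Y \<in> carrier_mat n n"
    have "J * (X + Y) * adj J = (J * X + J * Y) * adj J" by (simp add: mult_add_distrib_mat[OF J X Y])
    also have "\<dots> = J * X * adj J + J * Y * adj J"
      by (rule add_mult_distrib_mat[OF mult_carrier_mat[OF J X] mult_carrier_mat[OF J Y] adj_carrier[OF J]])
    finally have "J * (X + Y) * adj J = J * X * adj J + J * Y * adj J" .
    thus "E (J * (X + Y) * adj J) = E (J * X * adj J) + E (J * Y * adj J)" using Ea JYc[OF X] JYc[OF Y] by simp
  next
    fix k :: nat and X assume k: "0 < k" and X: "psd (k*n) X"
    have "psd (k*m) (id_tensor k n m (\<lambda>Y. J * Y * adj J) X)"
      by (rule kraus_CP[OF kr X])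
    hence "psd (k*d) (id_tensor k m d E (id_tensor k n m (\<lambda>Y. J * Y * adj J) X))" using Ecp k by blast
    thus "psd (k*d) (id_tensor k n d (\<lambda>Y. E (J * Y * adj J)) X)"
      using id_tensor_comp[of n "\<lambda>Y. J * Y * adj J" m k d E X] JYc by simp
  qed
qed

lemma comm_lift:
  assumes N: "linmap dA dB N" and W: "W \<in> carrier_mat dR dS" and Z: "Z \<in> carrier_mat (dS*dA) (dS*dA)"
  shows "kron W (1\<^sub>m dB) * id_tensor dS dA dB N Z * adj (kron W (1\<^sub>m dB)) =
    id_tensor dR dA dB N (kron W (1\<^sub>m dA) * Z * adj (kron W (1\<^sub>m dA)))"
proof (rule eq_matI)
  fix p q assume "p < dim_row (id_tensor dR dA dB N (kron W (1\<^sub>m dA) * Z * adj (kron W (1\<^sub>m dA))))"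
    "q < dim_col (id_tensor dR dA dB N (kron W (1\<^sub>m dA) * Z * adj (kron W (1\<^sub>m dA))))"
  hence p: "p < dR*dB" and q: "q < dR*dB" by auto
  define a where "a = p div dB"
  define a' where "a' = q div dB"
  define b where "b = p mod dB"
  define b' where "b' = q mod dB"
  have ab: "a < dR" "a' < dR" "b < dB" "b' < dB" unfolding a_def a'_def b_def b'_def using p q div_lt mod_lt by auto
  define blk where "blk x = mat dA dA (\<lambda>(i,j). Z $$ (fst x * dA + i, snd x * dA + j))" for x :: "nat \<times> nat"
  define I where "I = {..<dS} \<times> {..<dS}"
  have Y: "id_tensor dS dA dB N Z \<in> carrier_mat (dS*dB) (dS*dB)" by simp
  have "(kron W (1\<^sub>m dB) * id_tensor dS dA dB N Z * adj (kron W (1\<^sub>m dB))) $$ (p,q)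
     = (\<Sum>s<dS. \<Sum>s'<dS. W $$ (a, s) * id_tensor dS dA dB N Z $$ (s*dB + b, s'*dB + b') * cnj (W $$ (a', s')))"
    unfolding a_def a'_def b_def b'_def by (rule kron_id_congr[OF W Y p q])
  also have "\<dots> = (\<Sum>s<dS. \<Sum>s'<dS. W $$ (a, s) * N (blk (s,s')) $$ (b,b') * cnj (W $$ (a', s')))"
  proof (intro sum.cong refl)
    fix s s' assume s: "s \<in> {..<dS}" and s': "s' \<in> {..<dS}"
    have r: "s*dB + b < dS*dB" "s'*dB + b' < dS*dB" using s s' ab idx_lt by auto
    show "W $$ (a, s) * id_tensor dS dA dB N Z $$ (s*dB + b, s'*dB + b') * cnj (W $$ (a', s')) = W $$ (a, s) * N (blk (s,s')) $$ (b,b') * cnj (W $$ (a', s'))"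
      unfolding id_tensor_index[OF r] blk_def using ab by simp
  qed
  also have "\<dots> = (\<Sum>x\<in>I. (W $$ (a, fst x) * cnj (W $$ (a', snd x))) * N (blk x) $$ (b,b'))"
    unfolding I_def by (simp add: sum.cartesian_product case_prod_beta mult.commute mult.left_commute)
  also have "\<dots> = N (mat dA dA (\<lambda>(i,j). \<Sum>x\<in>I. (W $$ (a, fst x) * cnj (W $$ (a', snd x))) * blk x $$ (i,j))) $$ (b,b')"
    by (subst lin_sum[OF N]) (use ab in \<open>simp_all add: I_def blk_def\<close>)
  also have "mat dA dA (\<lambda>(i,j). \<Sum>x\<in>I. (W $$ (a, fst x) * cnj (W $$ (a', snd x))) * blk x $$ (i,j))
     = mat dA dA (\<lambda>(i,j). (kron W (1\<^sub>m dA) * Z * adj (kron W (1\<^sub>m dA))) $$ (a*dA + i, a'*dA + j))"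
  proof (rule eq_matI)
    fix i j assume "i < dim_row (mat dA dA (\<lambda>(i,j). (kron W (1\<^sub>m dA) * Z * adj (kron W (1\<^sub>m dA))) $$ (a*dA + i, a'*dA + j)))"
      "j < dim_col (mat dA dA (\<lambda>(i,j). (kron W (1\<^sub>m dA) * Z * adj (kron W (1\<^sub>m dA))) $$ (a*dA + i, a'*dA + j)))"
    hence i: "i < dA" and j: "j < dA" by auto
    have r: "a*dA + i < dR*dA" "a'*dA + j < dR*dA" using i j ab idx_lt by auto
    show "mat dA dA (\<lambda>(i,j). \<Sum>x\<in>I. (W $$ (a, fst x) * cnj (W $$ (a', snd x))) * blk x $$ (i,j)) $$ (i,j) =
      mat dA dA (\<lambda>(i,j). (kron W (1\<^sub>m dA) * Z * adj (kron W (1\<^sub>m dA))) $$ (a*dA + i, a'*dA + j)) $$ (i,j)"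
      using i j kron_id_congr[OF W Z r] unfolding I_def blk_def
      by (simp add: sum.cartesian_product case_prod_beta mult.commute mult.left_commute mult.assoc)
  qed auto
  also have "N (mat dA dA (\<lambda>(i,j). (kron W (1\<^sub>m dA) * Z * adj (kron W (1\<^sub>m dA))) $$ (a*dA + i, a'*dA + j))) $$ (b,b')
     = id_tensor dR dA dB N (kron W (1\<^sub>m dA) * Z * adj (kron W (1\<^sub>m dA))) $$ (p,q)"
    unfolding id_tensor_index[OF p q] a_def a'_def b_def b'_def ..
  finally show "(kron W (1\<^sub>m dB) * id_tensor dS dA dB N Z * adj (kron W (1\<^sub>m dB))) $$ (p,q) =
    id_tensor dR dA dB N (kron W (1\<^sub>m dA) * Z * adj (kron W (1\<^sub>m dA))) $$ (p,q)" .
qed (use W in \<open>auto simp: adj_def kron_def\<close>)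


lemma compress:
  assumes rea: "realization dA' dA dB dR V E" and dA': "0 < dA'"
    and z: "z \<in> carrier_vec dR" and nz: "z \<noteq> 0\<^sub>v dR"
    and orth: "\<forall>c<dA. \<forall>x<dA'. (\<Sum>a<dR. cnj (V $$ (a*dA + c, x)) * z $ a) = 0"
  shows "\<exists>V' E'. realization dA' dA dB (dR-1) V' E' \<and> (\<forall>N. CPTP dA dB N \<longrightarrow>
     (\<forall>X\<in>carrier_mat dA' dA'. superch dA dB (dR-1) V' E' N X = superch dA dB dR V E N X))"
proof -
  have dR: "0 < dR" and V: "V \<in> carrier_mat (dR*dA) dA'" and Viso: "adj V * V = 1\<^sub>m dA'" and E: "CPTP (dR*dB) dB E"
    using rea unfolding realization_def isometry_def by auto
  define dS where "dS = dR - 1"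
  obtain W where W: "W \<in> carrier_mat dR dS" and Wiso: "adj W * W = 1\<^sub>m dS"
    and proj: "\<forall>y. (\<Sum>a<dR. cnj (z $ a) * y a) = 0 \<longrightarrow> (\<forall>a<dR. (\<Sum>a'<dR. (W * adj W) $$ (a,a') * y a') = y a)"
    using W_exists[OF dR z nz] unfolding dS_def by blast
  define JA where "JA = kron W (1\<^sub>m dA)"
  define JB where "JB = kron W (1\<^sub>m dB)"
  have JA: "JA \<in> carrier_mat (dR*dA) (dS*dA)" unfolding JA_def using kron_carrier[OF W one_carrier_mat] .
  have JB: "JB \<in> carrier_mat (dR*dB) (dS*dB)" unfolding JB_def using kron_carrier[OF W one_carrier_mat] .
  define V' where "V' = adj JA * V"
  have V': "V' \<in> carrier_mat (dS*dA) dA'" unfolding V'_def using adj_carrier[OF JA] V by simp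
  have F1: "JA * V' = V"
  proof (rule eq_matI)
    fix P x assume "P < dim_row V" "x < dim_col V"
    hence P: "P < dR*dA" and x: "x < dA'" using V by auto
    define a0 where "a0 = P div dA"
    define c where "c = P mod dA"
    have a0: "a0 < dR" and c: "c < dA" unfolding a0_def c_def using P div_lt mod_lt by auto
    have "(JA * V') $$ (P,x) = (\<Sum>s<dS. W $$ (a0, s) * V' $$ (s*dA + c, x))"
      unfolding JA_def a0_def c_def by (rule kron_id_mult[OF W V' P x])
    also have "\<dots> = (\<Sum>s<dS. W $$ (a0, s) * (\<Sum>a<dR. cnj (W $$ (a, s)) * V $$ (a*dA + c, x)))"
    proof (rule sum.cong[OF refl])
      fix s assume s: "s \<in> {..<dS}"
      have r: "s*dA + c < dS*dA" using s c idx_lt by auto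
      have "V' $$ (s*dA + c, x) = (\<Sum>a<dR. adj W $$ (s, a) * V $$ (a*dA + c, x))"
        unfolding V'_def JA_def adj_kron_id using kron_id_mult[OF adj_carrier[OF W] V r x] c by simp
      also have "\<dots> = (\<Sum>a<dR. cnj (W $$ (a, s)) * V $$ (a*dA + c, x))"
        by (rule sum.cong[OF refl]) (use W s in \<open>simp add: adj_entry\<close>)
      finally show "W $$ (a0, s) * V' $$ (s*dA + c, x) = W $$ (a0, s) * (\<Sum>a<dR. cnj (W $$ (a, s)) * V $$ (a*dA + c, x))" by simp
    qed
    also have "\<dots> = (\<Sum>a<dR. (\<Sum>s<dS. W $$ (a0, s) * adj W $$ (s, a)) * V $$ (a*dA + c, x))"
    proof -
      have "(\<Sum>s<dS. W $$ (a0, s) * (\<Sum>a<dR. cnj (W $$ (a, s)) * V $$ (a*dA + c, x)))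
        = (\<Sum>s<dS. \<Sum>a<dR. W $$ (a0, s) * adj W $$ (s, a) * V $$ (a*dA + c, x))"
        by (intro sum.cong refl) (use W in \<open>auto simp: sum_distrib_left adj_entry mult.assoc\<close>)
      also have "\<dots> = (\<Sum>a<dR. \<Sum>s<dS. W $$ (a0, s) * adj W $$ (s, a) * V $$ (a*dA + c, x))" by (rule sum.swap)
      finally show ?thesis by (simp add: sum_distrib_right)
    qed
    also have "\<dots> = (\<Sum>a<dR. (W * adj W) $$ (a0, a) * V $$ (a*dA + c, x))"
      by (intro sum.cong refl) (use W a0 in \<open>simp add: mult_entry[OF W adj_carrier[OF W]] del: index_mult_mat\<close>)
    also have "\<dots> = V $$ (a0*dA + c, x)"
    proof -
      have "(\<Sum>a<dR. cnj (z $ a) * V $$ (a*dA + c, x)) = 0"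
      proof -
        have "cnj (\<Sum>a<dR. cnj (V $$ (a*dA + c, x)) * z $ a) = 0" using orth c x by simp
        thus ?thesis by (simp add: cnj_sum mult.commute)
      qed
      thus ?thesis using proj[rule_format, of "\<lambda>a. V $$ (a*dA + c, x)" a0] a0 by simp
    qed
    also have "a0*dA + c = P" unfolding a0_def c_def by simp
    finally show "(JA * V') $$ (P,x) = V $$ (P,x)" .
  qed (use JA V' V in auto)
  have F2: "adj V' * V' = 1\<^sub>m dA'"
  proof -
    have "adj V' = adj V * adj (adj JA)" unfolding V'_def by (rule adj_mult[OF adj_carrier[OF JA] V])
    hence "adj V' = adj V * JA" by (simp add: adj_adj)
    hence "adj V' * V' = adj V * JA * V'" by simp
    also have "\<dots> = adj V * (JA * V')" using adj_carrier[OF V] JA V' by (rule assoc_mult_mat)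
    also have "\<dots> = 1\<^sub>m dA'" using F1 Viso by simp
    finally show ?thesis .
  qed
  have dS: "0 < dS"
  proof (rule ccontr)
    assume "\<not> 0 < dS"
    hence d0: "dS = 0" by simp
    have "(adj V' * V') $$ (0,0) = (\<Sum>t<dS*dA. adj V' $$ (0,t) * V' $$ (t,0))"
      using dA' by (intro mult_entry[OF adj_carrier[OF V'] V']) auto
    also have "\<dots> = 0" using d0 by simp
    finally show False using F2 dA' by simp
  qed
  define E' where "E' = (\<lambda>Y. E (JB * Y * adj JB))"
  have JBiso: "adj JB * JB = 1\<^sub>m (dS*dB)" unfolding JB_def by (rule kron_id_iso[OF W Wiso])
  have E': "CPTP (dS*dB) dB E'" unfolding E'_def by (rule CPTP_congr[OF JB JBiso E])
  have rea': "realization dA' dA dB dS V' E'" unfolding realization_def isometry_def using dS V' F2 E' by simp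
  have eq: "superch dA dB dS V' E' N X = superch dA dB dR V E N X" if N: "CPTP dA dB N" and X: "X \<in> carrier_mat dA' dA'" for N X
  proof -
    have Z: "V' * X * adj V' \<in> carrier_mat (dS*dA) (dS*dA)" using V' X adj_carrier[OF V'] by simp
    have "V * X * adj V = JA * (V' * X * adj V') * adj JA"
    proof -
      have aV: "adj V = adj V' * adj JA" using adj_mult[OF JA V'] F1 by simp
      have "V * X * adj V = (JA * V') * X * (adj V' * adj JA)" using F1 aV by simp
      also have "\<dots> = JA * (V' * X * adj V') * adj JA"
      proof -
        have VX: "V' * X \<in> carrier_mat (dS*dA) dA'" using V' X by simp
        have aV': "adj V' \<in> carrier_mat dA' (dS*dA)" using adj_carrier[OF V'] .
        have aJA: "adj JA \<in> carrier_mat (dS*dA) (dR*dA)" using adj_carrier[OF JA] .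
        have s1: "JA * V' * X = JA * (V' * X)" by (rule assoc_mult_mat[OF JA V' X])
        have s2: "JA * (V' * X) * (adj V' * adj JA) = JA * (V' * X) * adj V' * adj JA"
          by (rule assoc_mult_mat[OF mult_carrier_mat[OF JA VX] aV' aJA, symmetric])
        have s3: "JA * (V' * X) * adj V' = JA * (V' * X * adj V')" by (rule assoc_mult_mat[OF JA VX aV'])
        show ?thesis unfolding s1 s2 s3 ..
      qed
      finally show ?thesis .
    qed
    hence "superch dA dB dR V E N X = E (id_tensor dR dA dB N (JA * (V' * X * adj V') * adj JA))"
      unfolding superch_def by simp
    also have "\<dots> = E (JB * id_tensor dS dA dB N (V' * X * adj V') * adj JB)"
      unfolding JA_def JB_def using comm_lift[OF CPTP_linmap[OF N] W Z] by simp
    also have "\<dots> = superch dA dB dS V' E' N X" unfolding superch_def E'_def ..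
    finally show ?thesis by simp
  qed
  show ?thesis using rea' eq unfolding dS_def by blast
qed

lemma dir2_3:
  assumes dA': "0 < dA'" and dA: "0 < dA" and dB: "0 < dB" and sf: "standard_form dA' dA dB dR V E"
    and m2: "marg_uniform dA' dB dA (superch_ext dA' dA dB dR V E 1 dA (\<lambda>X. kron (unif dB) X))"
  shows "cond_unital dR dB E"
proof -
  have rea: "realization dA' dA dB dR V E" using sf unfolding standard_form_def by blast
  have dR: "0 < dR" and V: "V \<in> carrier_mat (dR*dA) dA'" and E: "CPTP (dR*dB) dB E"
    using rea unfolding realization_def isometry_def by auto
  define K where "K = Kmat dR dA dA' V"
  have K: "K \<in> carrier_mat dR (dA*dA')" unfolding K_def by (rule Kmat_carrier)
  have rho: "K * adj K \<in> carrier_mat dR dR" using K adj_carrier[OF K] by simp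
  from dichotomy[OF rho] show ?thesis
  proof
    assume "\<exists>B. B \<in> carrier_mat dR dR \<and> K * adj K * B = 1\<^sub>m dR \<and> B * (K * adj K) = 1\<^sub>m dR"
    then obtain B where B: "B \<in> carrier_mat dR dR" and i1: "K * adj K * B = 1\<^sub>m dR" and i2: "B * (K * adj K) = 1\<^sub>m dR"
      by blast
    show ?thesis unfolding cond_unital_def
    proof (intro allI impI)
      fix \<tau> assume d: "density dR \<tau>"
      hence tc: "\<tau> \<in> carrier_mat dR dR" and tr: "mtrace \<tau> = 1" unfolding density_def psd_def by auto
      have "E (kron \<tau> (unif dB)) = mtrace \<tau> \<cdot>\<^sub>m unif dB"
        by (rule inv_case[OF E dB dA V m2 B i1[unfolded K_def] i2[unfolded K_def] tc])
      thus "E (kron \<tau> (unif dB)) = unif dB" using tr by (auto intro!: eq_matI)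
    qed
  next
    assume "\<exists>v. v \<in> carrier_vec dR \<and> v \<noteq> 0\<^sub>v dR \<and> K * adj K *\<^sub>v v = 0\<^sub>v dR"
    then obtain z where z: "z \<in> carrier_vec dR" and nz: "z \<noteq> 0\<^sub>v dR" and rz: "K * adj K *\<^sub>v z = 0\<^sub>v dR" by blast
    have orth: "\<forall>c<dA. \<forall>x<dA'. (\<Sum>a<dR. cnj (V $$ (a*dA + c, x)) * z $ a) = 0"
      using sing_case[OF V z rz[unfolded K_def]] by blast
    obtain V' E' where r': "realization dA' dA dB (dR-1) V' E'" and eq: "\<forall>N. CPTP dA dB N \<longrightarrow>
       (\<forall>X\<in>carrier_mat dA' dA'. superch dA dB (dR-1) V' E' N X = superch dA dB dR V E N X)"
      using compress[OF rea dA' z nz orth] by blast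
    have "dR \<le> dR - 1" using sf r' eq unfolding standard_form_def by blast
    thus ?thesis using dR by simp
  qed
qed

theorem theorem11:
  fixes dA' dA dB dR :: nat and V :: "complex mat" and E :: "complex mat \<Rightarrow> complex mat"
  assumes "0 < dA'" and "0 < dA" and "0 < dB"
    and "standard_form dA' dA dB dR V E"
  shows "(compl_unif_preserving dA' dA dB dR V E
            \<longleftrightarrow> marg_uniform dA' dB dA (superch_ext dA' dA dB dR V E 1 dA (\<lambda>X. kron (unif dB) X)))
       \<and> (marg_uniform dA' dB dA (superch_ext dA' dA dB dR V E 1 dA (\<lambda>X. kron (unif dB) X))
            \<longleftrightarrow> cond_unital dR dB E)"
proof -
  have E: "CPTP (dR*dB) dB E" using assms(4) unfolding standard_form_def realization_def by blast
  have a: "compl_unif_preserving dA' dA dB dR V E \<Longrightarrow> marg_uniform dA' dB dA (superch_ext dA' dA dB dR V E 1 dA (\<lambda>X. kron (unif dB) X))"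
    using dir1_2 assms(2,3) by blast
  have b: "marg_uniform dA' dB dA (superch_ext dA' dA dB dR V E 1 dA (\<lambda>X. kron (unif dB) X)) \<Longrightarrow> cond_unital dR dB E"
    using dir2_3 assms by blast
  have c: "cond_unital dR dB E \<Longrightarrow> compl_unif_preserving dA' dA dB dR V E"
    using dir3_1 E assms(3) by blast
  show ?thesis using a b c by blast
qed


end
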